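(* For all $G,G'\in c(\mathbb Z_{\ge0},C(\mathbb Z_s))$, $$T_W(G)T_W(G')-T_W(GG')\in\mathcal K(H)_{\mathrm{inv}}.$$
   Context: Fix an integer $s\ge2$; $\mathbb Z_s$ is the compact ring of $s$-adic integers. Let $\mathcal V=\{(n,x): n\in\mathbb Z_{\ge0},\ x\in\mathbb Z,\ 0\le x<s^n\}$, $H=\ell^2(\mathcal V)$ with orthonormal basis $\{E_{(n,x)}\}$, $M_fE_{(n,x)}=f(x)E_{(n,x)}$. The Serre shift is the isometry $WE_{(n,x)}=\frac1{\sqrt s}\sum_{j=0}^{s-1}E_{(n+1,x+js^n)}$. Let $\mathcal P_0=I-WW^*$ and $\mathcal P_n=W^n\mathcal P_0(W^* )^n$ (mutually orthogonal projections). $c(\mathbb Z_{\ge0},C(\mathbb Z_s))\cong c(\mathbb Z_{\ge0})\otimes C(\mathbb Z_s)$ is the C$^*$-algebra of sequences $G=(g_n)_{n\ge0}$ in $C(\mathbb Z_s)$ converging uniformly to $g_\infty$, with pointwise product. $T_W(G)=\sum_{n=0}^\infty\mathcal P_n(M_{g_n}-M_{g_\infty})\mathcal P_n+M_{g_\infty}$ (norm convergent). $\mathcal K(H)_{\mathrm{inv}}$ is the set of compact operators fixed by the gauge action $\rho_\theta(a)=\mathcal U_\theta a\,\mathcal U_\theta^{-1}$, $\mathcal U_\theta E_{(n,x)}=e^{2\pi in\theta}E_{(n,x)}$. *)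

theory Defs
  imports "HOL-Analysis.Analysis"
begin

text \<open>Z_s is modelled as digit sequences (i-th s-adic digit), i.e. the product of countably
many copies of the discrete space {0..<s}, with the product topology.\<close>

definition Zs_top :: "nat \<Rightarrow> (nat \<Rightarrow> nat) topology" where
  "Zs_top s = product_topology (\<lambda>_. discrete_topology {..<s}) UNIV"

definition zs_of :: "nat \<Rightarrow> nat \<Rightarrow> (nat \<Rightarrow> nat)" where
  "zs_of s x = (\<lambda>i. (x div s ^ i) mod s)"

definition cseq :: "nat \<Rightarrow> (nat \<Rightarrow> (nat \<Rightarrow> nat) \<Rightarrow> complex) \<Rightarrow> bool" where
  "cseq s g \<longleftrightarrow> (\<forall>n. continuous_map (Zs_top s) euclidean (g n)) \<and>
     (\<exists>L. continuous_map (Zs_top s) euclidean L \<and>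
        (\<forall>e>0. \<exists>N. \<forall>n\<ge>N. \<forall>z\<in>topspace (Zs_top s). cmod (g n z - L z) < e))"

definition glim :: "(nat \<Rightarrow> (nat \<Rightarrow> nat) \<Rightarrow> complex) \<Rightarrow> (nat \<Rightarrow> nat) \<Rightarrow> complex" where
  "glim g = (\<lambda>z. lim (\<lambda>n. g n z))"

definition Vset :: "nat \<Rightarrow> (nat \<times> nat) set" where
  "Vset s = {(n, x). x < s ^ n}"

definition inH :: "nat \<Rightarrow> (nat \<times> nat \<Rightarrow> complex) \<Rightarrow> bool" where
  "inH s v \<longleftrightarrow> (\<forall>p. p \<notin> Vset s \<longrightarrow> v p = 0) \<and> (\<lambda>p. (cmod (v p))\<^sup>2) summable_on UNIV"

definition l2norm :: "(nat \<times> nat \<Rightarrow> complex) \<Rightarrow> real" where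
  "l2norm v = sqrt (\<Sum>\<^sub>\<infinity>p. (cmod (v p))\<^sup>2)"

type_synonym op = "(nat \<times> nat \<Rightarrow> complex) \<Rightarrow> (nat \<times> nat \<Rightarrow> complex)"

text \<open>Serre shift W (coordinate form of W E_(n,x) = s^(-1/2) \<Sum>_j E_(n+1, x + j s^n))
and its adjoint W*.\<close>
definition Wop :: "nat \<Rightarrow> op" where
  "Wop s v = (\<lambda>(m, y). if m = 0 \<or> s ^ m \<le> y then 0
                       else v (m - 1, y mod s ^ (m - 1)) / complex_of_real (sqrt (real s)))"

definition Wadj :: "nat \<Rightarrow> op" where
  "Wadj s v = (\<lambda>(n, x). if s ^ n \<le> x then 0
                       else (\<Sum>j<s. v (n + 1, x + j * s ^ n)) / complex_of_real (sqrt (real s)))"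

definition P0 :: "nat \<Rightarrow> op" where
  "P0 s v = v - Wop s (Wadj s v)"

definition Pn :: "nat \<Rightarrow> nat \<Rightarrow> op" where
  "Pn s n = (Wop s ^^ n) \<circ> P0 s \<circ> (Wadj s ^^ n)"

definition Mop :: "nat \<Rightarrow> ((nat \<Rightarrow> nat) \<Rightarrow> complex) \<Rightarrow> op" where
  "Mop s f v = (\<lambda>(n, x). f (zs_of s x) * v (n, x))"

text \<open>T_W(G) = \<Sum>_n P_n (M_{g_n} - M_{g_\<infinity>}) P_n + M_{g_\<infinity>}; the (norm convergent) series
is evaluated coordinatewise, which gives the same operator.\<close>
definition TW :: "nat \<Rightarrow> (nat \<Rightarrow> (nat \<Rightarrow> nat) \<Rightarrow> complex) \<Rightarrow> op" where
  "TW s g v = (\<lambda>p. (\<Sum>n. Pn s n (Mop s (g n) (Pn s n v) - Mop s (glim g) (Pn s n v)) p)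
                   + Mop s (glim g) v p)"

definition compact_op :: "nat \<Rightarrow> op \<Rightarrow> bool" where
  "compact_op s T \<longleftrightarrow>
     (\<forall>v. inH s v \<longrightarrow> inH s (T v)) \<and>
     (\<forall>u v (a::complex) (b::complex). inH s u \<longrightarrow> inH s v \<longrightarrow>
        T (\<lambda>p. a * u p + b * v p) = (\<lambda>p. a * T u p + b * T v p)) \<and>
     (\<forall>(vs :: nat \<Rightarrow> nat \<times> nat \<Rightarrow> complex) (B::real). (\<forall>k. inH s (vs k) \<and> l2norm (vs k) \<le> B) \<longrightarrow>
        (\<exists>(r :: nat \<Rightarrow> nat) w. strict_mono r \<and> inH s w \<and> (\<lambda>k. l2norm (T (vs (r k)) - w)) \<longlonglongrightarrow> 0))"

definition Uop :: "real \<Rightarrow> op" where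
  "Uop \<theta> v = (\<lambda>(n, x). cis (2 * pi * real n * \<theta>) * v (n, x))"

definition compact_inv :: "nat \<Rightarrow> op \<Rightarrow> bool" where
  "compact_inv s T \<longleftrightarrow> compact_op s T \<and>
     (\<forall>\<theta> v. inH s v \<longrightarrow> Uop \<theta> (T (Uop (- \<theta>) v)) = T v)"

end

theory Submission
  imports Defs "HOL-Library.Diagonal_Subsequence"
begin

definition cls :: "nat \<Rightarrow> nat \<Rightarrow> nat \<Rightarrow> nat \<Rightarrow> nat set" where
  "cls s m k y = {y'. y' < s^m \<and> y' mod s^k = y mod s^k}"

definition Ek :: "nat \<Rightarrow> nat \<Rightarrow> nat \<Rightarrow> (nat \<Rightarrow> complex) \<Rightarrow> nat \<Rightarrow> complex" where
  "Ek s m k u y = (if y < s^m then (\<Sum>y'\<in>cls s m k y. u y') / of_nat (s^(m-k)) else 0)"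

lemma finite_cls[simp]: "finite (cls s m k y)"
  unfolding cls_def by auto

lemma mod_pow_le: "j \<le> k \<Longrightarrow> a mod s^k = b mod (s::nat)^k \<Longrightarrow> a mod s^j = b mod s^j"
  by (metis le_imp_power_dvd mod_mod_cancel)

lemma cls_img:
  assumes "0 < s" "k \<le> m"
  shows "cls s m k y = (\<lambda>j. y mod s^k + j * s^k) ` {..<s^(m-k)}"
proof
  have sm: "s^m = s^(m-k) * s^k" using assms by (simp add: power_add[symmetric])
  show "cls s m k y \<subseteq> (\<lambda>j. y mod s^k + j * s^k) ` {..<s^(m-k)}"
  proof
    fix y' assume "y' \<in> cls s m k y"
    hence y': "y' < s^m" "y' mod s^k = y mod s^k" by (auto simp: cls_def)
    have "y' div s^k < s^(m-k)" using y'(1) sm assms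
      by (simp add: div_less_iff_less_mult)
    moreover have "y' = y mod s^k + (y' div s^k) * s^k" using y'(2)
      by (metis mod_div_mult_eq add.commute)
    ultimately show "y' \<in> (\<lambda>j. y mod s^k + j * s^k) ` {..<s^(m-k)}" by blast
  qed
  show "(\<lambda>j. y mod s^k + j * s^k) ` {..<s^(m-k)} \<subseteq> cls s m k y"
  proof
    fix y' assume "y' \<in> (\<lambda>j. y mod s^k + j * s^k) ` {..<s^(m-k)}"
    then obtain j where j: "j < s^(m-k)" "y' = y mod s^k + j * s^k" by auto
    have "y mod s^k < s^k" using assms by simp
    hence "y' < s^k + j * s^k" using j by simp
    also have "\<dots> = (j+1) * s^k" by simp
    also have "\<dots> \<le> s^(m-k) * s^k" using j by (intro mult_right_mono) auto
    finally have "y' < s^m" using sm by simp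
    moreover have "y' mod s^k = y mod s^k" using j by simp
    ultimately show "y' \<in> cls s m k y" by (simp add: cls_def)
  qed
qed

lemma cls_inj: "0 < s \<Longrightarrow> inj_on (\<lambda>j. c + j * s^k) (A::nat set)"
  by (auto simp: inj_on_def)

lemma card_cls: "0 < s \<Longrightarrow> k \<le> m \<Longrightarrow> card (cls s m k y) = s^(m-k)"
  by (simp only: cls_img card_image[OF cls_inj] card_lessThan)

lemma sum_cls: "0 < s \<Longrightarrow> k \<le> m \<Longrightarrow> (\<Sum>y'\<in>cls s m k y. f y') = (\<Sum>j<s^(m-k). f (y mod s^k + j * s^k))"
  by (simp only: cls_img sum.reindex[OF cls_inj] o_def)

lemma cls_eq: "j \<le> k \<Longrightarrow> y' \<in> cls s m k y \<Longrightarrow> cls s m j y' = cls s m j y"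
proof -
  assume jk: "j \<le> k" and y': "y' \<in> cls s m k y"
  hence "y' mod s^j = y mod s^j" using mod_pow_le[OF jk, of y' s y] by (simp add: cls_def)
  thus ?thesis by (simp add: cls_def)
qed

lemma Ek_out[simp]: "\<not> y < s^m \<Longrightarrow> Ek s m k u y = 0"
  by (simp add: Ek_def)

lemma Ek_in: "y < s^m \<Longrightarrow> Ek s m k u y = (\<Sum>y'\<in>cls s m k y. u y') / of_nat (s^(m-k))"
  by (simp add: Ek_def)

lemma Ek_cong: "(\<And>y. y < s^m \<Longrightarrow> u y = w y) \<Longrightarrow> Ek s m k u = Ek s m k w"
  by (auto simp: Ek_def cls_def intro!: ext sum.cong)

lemma Ek_lin: "Ek s m k (\<lambda>y. a * u y + b * w y) y = a * Ek s m k u y + b * Ek s m k w y"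
  by (simp add: Ek_def sum.distrib sum_distrib_left add_divide_distrib)

lemma Ek_diff: "Ek s m k (\<lambda>y. u y - w y) y = Ek s m k u y - Ek s m k w y"
  by (simp add: Ek_def sum_subtractf diff_divide_distrib)

lemma Ek_zero[simp]: "Ek s m k (\<lambda>y. 0) = (\<lambda>y. 0)"
  by (simp add: Ek_def fun_eq_iff)

lemma Ek_scale: "Ek s m k (\<lambda>y. a * u y) y = a * Ek s m k u y"
  by (simp add: Ek_def sum_distrib_left)

lemma Ek_top: "0 < s \<Longrightarrow> Ek s m m u y = (if y < s^m then u y else 0)"
proof -
  assume s: "0 < s"
  have "y < s^m \<Longrightarrow> cls s m m y = {y}" by (auto simp: cls_def)
  thus ?thesis by (simp add: Ek_def)
qed

lemma Ek_Ek:
  assumes s: "0 < s" and jm: "j \<le> m" and km: "k \<le> m"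
  shows "Ek s m j (Ek s m k u) y = Ek s m (min j k) u y"
proof (cases "y < s^m")
  case False thus ?thesis by simp
next
  case True
  have inner: "y' \<in> cls s m j y \<Longrightarrow> Ek s m k u y' = (\<Sum>y''\<in>cls s m k y'. u y'') / of_nat (s^(m-k))" for y'
    by (simp add: Ek_def cls_def)
  show ?thesis
  proof (cases "j \<le> k")
    case jk: True
    have "(\<Sum>y'\<in>cls s m j y. \<Sum>y''\<in>cls s m k y'. u y'')
        = (\<Sum>y'\<in>cls s m j y. \<Sum>y''\<in>{y''\<in>{..<s^m}. y'' mod s^k = y' mod s^k}. u y'')"
      by (intro sum.cong refl) (auto simp: cls_def)
    also have "\<dots> = (\<Sum>y''\<in>{..<s^m}. \<Sum>y'\<in>{y'\<in>cls s m j y. y'' mod s^k = y' mod s^k}. u y'')"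
      by (rule sum.swap_restrict) auto
    also have "\<dots> = (\<Sum>y''\<in>{..<s^m}. if y'' \<in> cls s m j y then of_nat (s^(m-k)) * u y'' else 0)"
    proof (intro sum.cong refl)
      fix y'' assume y'': "y'' \<in> {..<s^m}"
      show "(\<Sum>y'\<in>{y'\<in>cls s m j y. y'' mod s^k = y' mod s^k}. u y'')
          = (if y'' \<in> cls s m j y then of_nat (s^(m-k)) * u y'' else 0)"
      proof (cases "y'' \<in> cls s m j y")
        case True
        have "{y'\<in>cls s m j y. y'' mod s^k = y' mod s^k} = cls s m k y''"
        proof (intro set_eqI iffI)
          fix x assume "x \<in> {y'\<in>cls s m j y. y'' mod s^k = y' mod s^k}"
          thus "x \<in> cls s m k y''" by (auto simp: cls_def)
        next
          fix x assume x: "x \<in> cls s m k y''"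
          hence "x mod s^k = y'' mod s^k" by (simp add: cls_def)
          hence "x mod s^j = y'' mod s^j" by (rule mod_pow_le[OF jk])
          thus "x \<in> {y'\<in>cls s m j y. y'' mod s^k = y' mod s^k}" using x True by (auto simp: cls_def)
        qed
        thus ?thesis using True card_cls[OF s km] by simp
      next
        case False
        have "{y'\<in>cls s m j y. y'' mod s^k = y' mod s^k} = {}"
        proof (rule ccontr)
          assume "{y'\<in>cls s m j y. y'' mod s^k = y' mod s^k} \<noteq> {}"
          then obtain x where x: "x \<in> cls s m j y" "y'' mod s^k = x mod s^k" by auto
          hence "y'' mod s^j = x mod s^j" using mod_pow_le[OF jk x(2)] by simp
          thus False using x y'' False by (auto simp: cls_def)
        qed
        thus ?thesis using False by simp
      qed
    qed
    also have "\<dots> = (\<Sum>y''\<in>{x\<in>{..<s^m}. x \<in> cls s m j y}. of_nat (s^(m-k)) * u y'')"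
      by (rule sum.inter_filter[symmetric]) simp
    also have "\<dots> = (\<Sum>y''\<in>cls s m j y. of_nat (s^(m-k)) * u y'')"
    proof -
      have "{x\<in>{..<s^m}. x \<in> cls s m j y} = cls s m j y" by (auto simp: cls_def)
      thus ?thesis by simp
    qed
    finally have eq: "(\<Sum>y'\<in>cls s m j y. \<Sum>y''\<in>cls s m k y'. u y'') = of_nat (s^(m-k)) * (\<Sum>y''\<in>cls s m j y. u y'')"
      by (simp add: sum_distrib_left)
    have "Ek s m j (Ek s m k u) y = (\<Sum>y'\<in>cls s m j y. (\<Sum>y''\<in>cls s m k y'. u y'') / of_nat (s^(m-k))) / of_nat (s^(m-j))"
      using True by (simp only: Ek_in sum.cong[OF refl inner])
    also have "\<dots> = (\<Sum>y'\<in>cls s m j y. \<Sum>y''\<in>cls s m k y'. u y'') / of_nat (s^(m-k)) / of_nat (s^(m-j))"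
      by (simp add: sum_divide_distrib)
    also have "\<dots> = Ek s m j u y" using True s by (simp add: eq Ek_in)
    finally show ?thesis using jk by simp
  next
    case False
    hence kj: "k \<le> j" by simp
    have "Ek s m j (Ek s m k u) y = (\<Sum>y'\<in>cls s m j y. Ek s m k u y) / of_nat (s^(m-j))"
    proof -
      have "(\<Sum>y'\<in>cls s m j y. Ek s m k u y') = (\<Sum>y'\<in>cls s m j y. Ek s m k u y)"
      proof (intro sum.cong refl)
        fix y' assume y': "y' \<in> cls s m j y"
        have "cls s m k y' = cls s m k y" using cls_eq[OF kj y'] .
        moreover have "y' < s^m" using y' by (simp add: cls_def)
        ultimately show "Ek s m k u y' = Ek s m k u y" using True by (simp add: Ek_def)
      qed
      thus ?thesis using True by (simp add: Ek_def)
    qed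
    also have "\<dots> = Ek s m k u y" using card_cls[OF s jm] s by simp
    finally show ?thesis using kj by simp
  qed
qed

definition Dk :: "nat \<Rightarrow> nat \<Rightarrow> nat \<Rightarrow> (nat \<Rightarrow> complex) \<Rightarrow> nat \<Rightarrow> complex" where
  "Dk s m k u y = Ek s m k u y - (if k = 0 then 0 else Ek s m (k-1) u y)"

lemma Dk_out[simp]: "\<not> y < s^m \<Longrightarrow> Dk s m k u y = 0"
  by (simp add: Dk_def)

lemma Dk_cong: "(\<And>y. y < s^m \<Longrightarrow> u y = w y) \<Longrightarrow> Dk s m k u = Dk s m k w"
proof -
  assume h: "\<And>y. y < s^m \<Longrightarrow> u y = w y"
  have E: "Ek s m j u = Ek s m j w" for j by (rule Ek_cong) (rule h)
  show ?thesis unfolding Dk_def[abs_def] by (simp only: E)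
qed

lemma Dk_lin: "Dk s m k (\<lambda>y. a * u y + b * w y) y = a * Dk s m k u y + b * Dk s m k w y"
  by (simp add: Dk_def Ek_lin algebra_simps)

lemma Dk_diff: "Dk s m k (\<lambda>y. u y - w y) y = Dk s m k u y - Dk s m k w y"
  by (simp add: Dk_def Ek_diff algebra_simps)

lemma Dk_scale: "Dk s m k (\<lambda>y. a * u y) y = a * Dk s m k u y"
  by (simp add: Dk_def Ek_scale algebra_simps)

lemma Ek_zero'[simp]: "Ek s m k (\<lambda>y. 0) y = 0"
  by (simp add: Ek_def)

lemma Dk_zero[simp]: "Dk s m k (\<lambda>y. 0) = (\<lambda>y. 0)"
  by (rule ext) (simp add: Dk_def Ek_def)

lemma Dk_Dk:
  assumes s: "0 < s" and km: "k \<le> m" and lm: "l \<le> m"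
  shows "Dk s m k (Dk s m l u) y = (if k = l then Dk s m k u y else 0)"
proof -
  have E: "Ek s m a (\<lambda>y. Ek s m b u y - (if l = 0 then 0 else Ek s m c u y)) y
     = Ek s m (min a b) u y - (if l = 0 then 0 else Ek s m (min a c) u y)"
    if "a \<le> m" "b \<le> m" "c \<le> m" for a b c
    using that by (cases "l = 0") (simp_all add: Ek_diff Ek_Ek[OF s])
  have "Dk s m k (Dk s m l u) y =
     (Ek s m (min k l) u y - (if l = 0 then 0 else Ek s m (min k (l-1)) u y)) -
     (if k = 0 then 0 else Ek s m (min (k-1) l) u y - (if l = 0 then 0 else Ek s m (min (k-1) (l-1)) u y))"
    unfolding Dk_def[of s m l] using km lm by (simp add: Dk_def E)
  moreover have "k < l \<Longrightarrow> ?this = ?this" by simp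
  ultimately show ?thesis
  proof -
    assume H: "Dk s m k (Dk s m l u) y =
     (Ek s m (min k l) u y - (if l = 0 then 0 else Ek s m (min k (l-1)) u y)) -
     (if k = 0 then 0 else Ek s m (min (k-1) l) u y - (if l = 0 then 0 else Ek s m (min (k-1) (l-1)) u y))"
    consider (lt) "k < l" | (eq) "k = l" | (gt) "l < k" by linarith
    thus ?thesis
    proof cases
      case lt
      hence "min k l = k" "min k (l-1) = k" "min (k-1) l = k-1" "min (k-1) (l-1) = k-1" "l \<noteq> 0" by auto
      thus ?thesis using H lt by simp
    next
      case eq
      hence "min k l = k" "min k (l-1) = k-1" "min (k-1) l = k-1" "min (k-1) (l-1) = k-1" by auto
      thus ?thesis using H eq by (simp add: Dk_def)
    next
      case gt
      hence "min k l = l" "min k (l-1) = l-1" "min (k-1) l = l" "min (k-1) (l-1) = l-1" "k \<noteq> 0" by auto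
      thus ?thesis using H gt by simp
    qed
  qed
qed

lemma Dk_sum: "0 < s \<Longrightarrow> (\<Sum>k\<le>n. Dk s m k u y) = Ek s m n u y"
  by (induction n) (simp_all add: Dk_def)

lemma Dk_sum_top: "0 < s \<Longrightarrow> y < s^m \<Longrightarrow> (\<Sum>k\<le>m. Dk s m k u y) = u y"
  by (simp add: Dk_sum Ek_top)

definition inr :: "nat \<Rightarrow> nat \<Rightarrow> (nat \<Rightarrow> complex) \<Rightarrow> (nat \<Rightarrow> complex) \<Rightarrow> complex" where
  "inr s m a b = (\<Sum>y<s^m. cnj (a y) * b y)"

definition nrm :: "nat \<Rightarrow> nat \<Rightarrow> (nat \<Rightarrow> complex) \<Rightarrow> real" where
  "nrm s m u = L2_set (\<lambda>y. cmod (u y)) {..<s^m}"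

lemma nrm_nonneg[simp]: "0 \<le> nrm s m u" by (simp add: nrm_def)

lemma nrm_sq: "(nrm s m u)^2 = (\<Sum>y<s^m. (cmod (u y))^2)"
  by (simp add: nrm_def L2_set_def sum_nonneg)

lemma inr_self: "inr s m u u = of_real ((nrm s m u)^2)"
  unfolding inr_def nrm_sq of_real_sum
  by (intro sum.cong refl) (metis complex_norm_square mult.commute)

lemma inr_cs: "cmod (inr s m a b) \<le> nrm s m a * nrm s m b"
proof -
  have "cmod (inr s m a b) \<le> (\<Sum>y<s^m. \<bar>cmod (a y)\<bar> * \<bar>cmod (b y)\<bar>)"
    unfolding inr_def by (rule order_trans[OF norm_sum]) (simp add: norm_mult)
  also have "\<dots> \<le> nrm s m a * nrm s m b" unfolding nrm_def by (rule L2_set_mult_ineq)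
  finally show ?thesis .
qed

lemma inr_cong2: "(\<And>y. y < s^m \<Longrightarrow> b y = b' y) \<Longrightarrow> inr s m a b = inr s m a b'"
  by (simp add: inr_def)

lemma inr_sum2: "inr s m a (\<lambda>y. \<Sum>k\<in>K. f k y) = (\<Sum>k\<in>K. inr s m a (f k))"
  unfolding inr_def by (simp add: sum_distrib_left) (rule sum.swap)

lemma inr_diff1: "inr s m (\<lambda>y. a y - a' y) b = inr s m a b - inr s m a' b"
  by (simp add: inr_def algebra_simps sum_subtractf)

lemma inr_Ek: 
  assumes s: "0 < s" and km: "k \<le> m"
  shows "inr s m (Ek s m k a) b = inr s m a (Ek s m k b)"
proof -
  let ?c = "of_nat (s^(m-k)) :: complex"
  let ?R = "\<lambda>y y'. y' mod s^k = y mod s^k"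
  have "inr s m (Ek s m k a) b = (\<Sum>y<s^m. (\<Sum>y'\<in>{y'\<in>{..<s^m}. ?R y y'}. cnj (a y') * b y) / ?c)"
    unfolding inr_def
  proof (intro sum.cong refl)
    fix y assume "y \<in> {..<s^m}"
    hence "Ek s m k a y = (\<Sum>y'\<in>{y'\<in>{..<s^m}. ?R y y'}. a y') / ?c"
      by (simp add: Ek_in cls_def)
    thus "cnj (Ek s m k a y) * b y = (\<Sum>y'\<in>{y'\<in>{..<s^m}. ?R y y'}. cnj (a y') * b y) / ?c"
      by (simp add: sum_distrib_right)
  qed
  also have "\<dots> = (\<Sum>y<s^m. \<Sum>y'\<in>{y'\<in>{..<s^m}. ?R y y'}. cnj (a y') * b y) / ?c"
    by (simp add: sum_divide_distrib)
  also have "(\<Sum>y<s^m. \<Sum>y'\<in>{y'\<in>{..<s^m}. ?R y y'}. cnj (a y') * b y)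
      = (\<Sum>y'<s^m. \<Sum>y\<in>{y\<in>{..<s^m}. ?R y y'}. cnj (a y') * b y)"
    by (rule sum.swap_restrict) auto
  also have "\<dots> / ?c = (\<Sum>y'<s^m. (\<Sum>y\<in>{y\<in>{..<s^m}. ?R y y'}. cnj (a y') * b y) / ?c)"
    by (simp add: sum_divide_distrib)
  also have "\<dots> = inr s m a (Ek s m k b)"
    unfolding inr_def
  proof (intro sum.cong refl)
    fix y' assume "y' \<in> {..<s^m}"
    hence "Ek s m k b y' = (\<Sum>y\<in>{y\<in>{..<s^m}. ?R y y'}. b y) / ?c"
    proof -
      assume "y' \<in> {..<s^m}"
      hence "Ek s m k b y' = (\<Sum>y\<in>cls s m k y'. b y) / ?c" by (simp add: Ek_in)
      moreover have "cls s m k y' = {y\<in>{..<s^m}. ?R y y'}" by (auto simp: cls_def)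
      ultimately show ?thesis by simp
    qed
    thus "(\<Sum>y\<in>{y\<in>{..<s^m}. ?R y y'}. cnj (a y') * b y) / ?c = cnj (a y') * Ek s m k b y'"
      by (simp add: sum_distrib_left)
  qed
  finally show ?thesis .
qed

lemma inr_Dk:
  assumes s: "0 < s" and km: "k \<le> m"
  shows "inr s m (Dk s m k a) b = inr s m a (Dk s m k b)"
proof -
  have "inr s m (Dk s m k a) b = inr s m (Ek s m k a) b - (if k = 0 then 0 else inr s m (Ek s m (k-1) a) b)"
    by (cases "k = 0") (simp_all add: inr_def Dk_def algebra_simps sum_subtractf)
  also have "\<dots> = inr s m a (Ek s m k b) - (if k = 0 then 0 else inr s m a (Ek s m (k-1) b))"
    using km by (simp add: inr_Ek[OF s])
  also have "\<dots> = inr s m a (Dk s m k b)"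
    by (cases "k = 0") (simp_all add: Dk_def inr_def algebra_simps sum_subtractf)
  finally show ?thesis .
qed

lemma pyth:
  assumes s: "0 < s"
  shows "(\<Sum>k\<le>m. (nrm s m (Dk s m k w))^2) = (nrm s m w)^2"
proof -
  have "of_real (\<Sum>k\<le>m. (nrm s m (Dk s m k w))^2) = (\<Sum>k\<le>m. inr s m (Dk s m k w) (Dk s m k w))"
    by (simp add: inr_self)
  also have "\<dots> = (\<Sum>k\<le>m. inr s m w (Dk s m k w))"
  proof (intro sum.cong refl)
    fix k assume "k \<in> {..m}"
    hence km: "k \<le> m" by simp
    have "inr s m (Dk s m k w) (Dk s m k w) = inr s m w (Dk s m k (Dk s m k w))"
      by (rule inr_Dk[OF s km])
    also have "Dk s m k (Dk s m k w) = Dk s m k w"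
      using Dk_Dk[OF s km km] by (simp add: fun_eq_iff)
    finally show "inr s m (Dk s m k w) (Dk s m k w) = inr s m w (Dk s m k w)" .
  qed
  also have "\<dots> = inr s m w (\<lambda>y. \<Sum>k\<le>m. Dk s m k w y)"
    by (simp add: inr_sum2)
  also have "\<dots> = inr s m w w"
    by (rule inr_cong2) (simp add: Dk_sum_top[OF s])
  also have "\<dots> = of_real ((nrm s m w)^2)" by (simp add: inr_self)
  finally show ?thesis by (simp only: of_real_eq_iff)
qed

lemma nrm_cong: "(\<And>y. y < s^m \<Longrightarrow> u y = w y) \<Longrightarrow> nrm s m u = nrm s m w"
  unfolding nrm_def by (intro L2_set_cong) auto

lemma nrm_mult_bound:
  assumes "\<And>y. y < s^m \<Longrightarrow> cmod (F y) \<le> b" and "0 \<le> b"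
  shows "nrm s m (\<lambda>y. F y * u y) \<le> b * nrm s m u"
proof -
  have "nrm s m (\<lambda>y. F y * u y) \<le> L2_set (\<lambda>y. b * cmod (u y)) {..<s^m}"
    unfolding nrm_def
    by (rule L2_set_mono) (auto simp: norm_mult intro!: mult_right_mono assms)
  also have "\<dots> = b * nrm s m u" unfolding nrm_def by (rule L2_set_right_distrib[symmetric]) fact
  finally show ?thesis .
qed

lemma nrm_add: "nrm s m (\<lambda>y. a y + b y) \<le> nrm s m a + nrm s m b"
proof -
  have "nrm s m (\<lambda>y. a y + b y) \<le> L2_set (\<lambda>y. cmod (a y) + cmod (b y)) {..<s^m}"
    unfolding nrm_def by (rule L2_set_mono) (auto intro: norm_triangle_ineq)
  also have "\<dots> \<le> nrm s m a + nrm s m b" unfolding nrm_def by (rule L2_set_triangle_ineq)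
  finally show ?thesis .
qed

lemma nrm_diff: "nrm s m (\<lambda>y. a y - b y) \<le> nrm s m a + nrm s m b"
proof -
  have "nrm s m (\<lambda>y. a y - b y) \<le> L2_set (\<lambda>y. cmod (a y) + cmod (b y)) {..<s^m}"
    unfolding nrm_def by (rule L2_set_mono) (auto intro: norm_triangle_ineq4)
  also have "\<dots> \<le> nrm s m a + nrm s m b" unfolding nrm_def by (rule L2_set_triangle_ineq)
  finally show ?thesis .
qed

lemma block:
  assumes s: "0 < s" and c: "0 \<le> c"
    and Y: "\<And>k u. k \<le> m \<Longrightarrow> nrm s m (Y k u) \<le> c * nrm s m u"
  shows "nrm s m (\<lambda>y. \<Sum>k\<le>m. Dk s m k (Y k (Dk s m k u)) y) \<le> c * nrm s m u"
proof -
  define w where "w = (\<lambda>y. \<Sum>k\<le>m. Dk s m k (Y k (Dk s m k u)) y)"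
  have "inr s m w w = (\<Sum>k\<le>m. inr s m w (Dk s m k (Y k (Dk s m k u))))"
    by (subst (2) w_def) (rule inr_sum2)
  also have "\<dots> = (\<Sum>k\<le>m. inr s m (Dk s m k w) (Y k (Dk s m k u)))"
    by (intro sum.cong refl) (simp add: inr_Dk[OF s])
  finally have eq: "inr s m w w = (\<Sum>k\<le>m. inr s m (Dk s m k w) (Y k (Dk s m k u)))" .
  have "(nrm s m w)^2 = cmod (inr s m w w)"
    unfolding inr_self norm_of_real by simp
  also have "\<dots> \<le> (\<Sum>k\<le>m. cmod (inr s m (Dk s m k w) (Y k (Dk s m k u))))"
    unfolding eq by (rule norm_sum)
  also have "\<dots> \<le> (\<Sum>k\<le>m. nrm s m (Dk s m k w) * (c * nrm s m (Dk s m k u)))"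
  proof (intro sum_mono)
    fix k assume "k \<in> {..m}"
    hence km: "k \<le> m" by simp
    show "cmod (inr s m (Dk s m k w) (Y k (Dk s m k u))) \<le> nrm s m (Dk s m k w) * (c * nrm s m (Dk s m k u))"
      by (rule order_trans[OF inr_cs]) (intro mult_left_mono Y km, simp)
  qed
  also have "\<dots> = c * (\<Sum>k\<le>m. \<bar>nrm s m (Dk s m k w)\<bar> * \<bar>nrm s m (Dk s m k u)\<bar>)"
    by (simp add: sum_distrib_left algebra_simps)
  also have "\<dots> \<le> c * (L2_set (\<lambda>k. nrm s m (Dk s m k w)) {..m} * L2_set (\<lambda>k. nrm s m (Dk s m k u)) {..m})"
    by (intro mult_left_mono c L2_set_mult_ineq)
  also have "L2_set (\<lambda>k. nrm s m (Dk s m k w)) {..m} = nrm s m w"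
    unfolding L2_set_def pyth[OF s] by simp
  also have "L2_set (\<lambda>k. nrm s m (Dk s m k u)) {..m} = nrm s m u"
    unfolding L2_set_def pyth[OF s] by simp
  finally have H: "(nrm s m w)^2 \<le> c * (nrm s m w * nrm s m u)" .
  show ?thesis
  proof (cases "nrm s m w = 0")
    case True thus ?thesis unfolding w_def[symmetric] using c by simp
  next
    case False
    hence "0 < nrm s m w" using nrm_nonneg[of s m w] by linarith
    moreover have "nrm s m w * nrm s m w \<le> nrm s m w * (c * nrm s m u)"
      using H by (simp add: power2_eq_square algebra_simps)
    ultimately have "nrm s m w \<le> c * nrm s m u" by (simp add: mult_le_cancel_left_pos)
    thus ?thesis unfolding w_def .
  qed
qed

definition Aop :: "nat \<Rightarrow> nat \<Rightarrow> (nat \<Rightarrow> nat \<Rightarrow> complex) \<Rightarrow> (nat \<Rightarrow> complex) \<Rightarrow> (nat \<Rightarrow> complex) \<Rightarrow> nat \<Rightarrow> complex" where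
  "Aop s m G Gi u = (\<lambda>y. (\<Sum>k\<le>m. Dk s m k (\<lambda>y'. (G (m-k) y' - Gi y') * Dk s m k u y') y) + Gi y * u y)"

lemma Aop_bound:
  assumes s: "0 < s" and a: "0 \<le> a" and b: "0 \<le> b"
    and G: "\<And>n y. y < s^m \<Longrightarrow> cmod (G n y - Gi y) \<le> a"
    and Gi: "\<And>y. y < s^m \<Longrightarrow> cmod (Gi y) \<le> b"
  shows "nrm s m (Aop s m G Gi u) \<le> (a + b) * nrm s m u"
proof -
  have "nrm s m (Aop s m G Gi u) \<le> nrm s m (\<lambda>y. \<Sum>k\<le>m. Dk s m k (\<lambda>y'. (G (m-k) y' - Gi y') * Dk s m k u y') y)
        + nrm s m (\<lambda>y. Gi y * u y)"
    unfolding Aop_def by (rule nrm_add)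
  also have "\<dots> \<le> a * nrm s m u + b * nrm s m u"
  proof (rule add_mono)
    show "nrm s m (\<lambda>y. \<Sum>k\<le>m. Dk s m k (\<lambda>y'. (G (m-k) y' - Gi y') * Dk s m k u y') y) \<le> a * nrm s m u"
      using block[OF s a, of m "\<lambda>k v y'. (G (m-k) y' - Gi y') * v y'" u]
      by (simp add: nrm_mult_bound G a)
    show "nrm s m (\<lambda>y. Gi y * u y) \<le> b * nrm s m u"
      by (rule nrm_mult_bound) (use Gi b in auto)
  qed
  finally show ?thesis by (simp add: algebra_simps)
qed

lemma sum_split_prod: fixes a b :: nat shows "(\<Sum>t<b*a. f t) = (\<Sum>i<b. \<Sum>j<a. f (j + i*a))"
proof (induction b)
  case 0 thus ?case by simp
next
  case (Suc b)
  have u: "{..<Suc b * a} = {..<b*a} \<union> {b*a..<b*a+a}" by auto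
  have "(\<Sum>t<Suc b * a. f t) = (\<Sum>t<b*a. f t) + (\<Sum>t\<in>{b*a..<b*a+a}. f t)"
    unfolding u by (rule sum.union_disjoint) auto
  also have "(\<Sum>t\<in>{b*a..<b*a+a}. f t) = (\<Sum>j<a. f (j + b*a))"
  proof -
    have "(\<Sum>t\<in>{0+b*a..<a+b*a}. f t) = (\<Sum>j\<in>{0..<a}. f (j + b*a))"
      by (rule sum.shift_bounds_nat_ivl)
    thus ?thesis by (simp add: add.commute atLeast0LessThan)
  qed
  finally show ?case using Suc.IH by simp
qed

abbreviation "rs s \<equiv> complex_of_real (sqrt (real s))"

lemma Wpow:
  assumes s: "0 < s"
  shows "y < s^m \<Longrightarrow> (Wop s ^^ n) v (m, y) = (if n \<le> m \<and> y < s^m then v (m-n, y mod s^(m-n)) / (rs s)^n else 0)"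
proof (induction n arbitrary: m y)
  case 0
  show ?case using 0 by simp
next
  case (Suc n)
  show ?case
  proof (cases m)
    case 0 thus ?thesis by (simp add: Wop_def)
  next
    case (Suc m')
    have lt: "y mod s^m' < s^m'" using s by simp
    have W: "(Wop s ^^ Suc n) v (m, y) = (Wop s ^^ n) v (m', y mod s^m') / rs s"
      using Suc Suc.prems by (simp add: Wop_def)
    show ?thesis
    proof (cases "n \<le> m'")
      case True
      have "(Wop s ^^ n) v (m', y mod s^m') = v (m'-n, y mod s^m' mod s^(m'-n)) / (rs s)^n"
        using Suc.IH[OF lt] True lt by simp
      also have "y mod s^m' mod s^(m'-n) = y mod s^(m'-n)"
        by (simp add: mod_mod_cancel le_imp_power_dvd)
      finally show ?thesis using W True Suc Suc.prems by (simp add: field_simps)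
    next
      case F2: False
      hence "(Wop s ^^ n) v (m', y mod s^m') = 0" using Suc.IH[OF lt] by simp
      thus ?thesis using W F2 Suc by simp
    qed
  qed
qed

lemma Wadjpow:
  assumes s: "0 < s" and True: "x < s^k"
  shows "(Wadj s ^^ n) v (k, x) = (\<Sum>j<(s^n). v (k+n, x + j * s^k)) / (rs s)^n"
proof (induction n arbitrary: v)
  case 0
  show ?case by simp
next
  case (Suc n)
  have inb: "x + j * s^k < s^(k+n)" if "j < s^n" for j
  proof -
    have "x + j * s^k < s^k + j * s^k" using True by simp
    also have "\<dots> = (j+1) * s^k" by simp
    also have "\<dots> \<le> s^n * s^k" using that by (intro mult_right_mono) auto
    finally show ?thesis by (simp add: power_add mult.commute)
  qed
  have "(Wadj s ^^ Suc n) v (k, x) = (Wadj s ^^ n) (Wadj s v) (k, x)" by (simp only: funpow_Suc_right o_def)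
  also have "\<dots> = (\<Sum>j<(s^n). Wadj s v (k+n, x + j * s^k)) / (rs s)^n" by (rule Suc.IH)
  also have "(\<Sum>j<(s^n). Wadj s v (k+n, x + j * s^k)) = (\<Sum>j<(s^n). (\<Sum>i<s. v (k + Suc n, x + (j + i * s^n) * s^k)) / rs s)"
  proof (intro sum.cong refl)
    fix j assume "j \<in> {..<s^n}"
    hence "x + j * s^k < s^(k+n)" using inb by simp
    thus "Wadj s v (k+n, x + j * s^k) = (\<Sum>i<s. v (k + Suc n, x + (j + i * s^n) * s^k)) / rs s"
      by (simp add: Wadj_def algebra_simps power_add)
  qed
  also have "\<dots> = (\<Sum>j<(s^n). \<Sum>i<s. v (k + Suc n, x + (j + i * s^n) * s^k)) / rs s"
    by (simp add: sum_divide_distrib)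
  also have "(\<Sum>j<(s^n). \<Sum>i<s. v (k + Suc n, x + (j + i * s^n) * s^k)) = (\<Sum>t<(s^(Suc n)). v (k + Suc n, x + t * s^k))"
  proof -
    have "(\<Sum>t<(s^(Suc n)). v (k + Suc n, x + t * s^k)) = (\<Sum>i<s. \<Sum>j<(s^n). v (k + Suc n, x + (j + i * s^n) * s^k))"
      using sum_split_prod[where b=s and a="s^n" and f="\<lambda>t. v (k + Suc n, x + t * s^k)"] by simp
    also have "\<dots> = (\<Sum>j<(s^n). \<Sum>i<s. v (k + Suc n, x + (j + i * s^n) * s^k))"
      by (rule sum.swap)
    finally show ?thesis by simp
  qed
  finally show ?case by (simp add: field_simps)
qed

lemma rs_sq: "(rs s)^n * (rs s)^n = of_nat (s^n)"
proof -
  have "(rs s)^n * (rs s)^n = ((rs s) * (rs s))^n" by (simp add: power_mult_distrib)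
  also have "rs s * rs s = of_nat s" by (simp flip: of_real_mult)
  finally show ?thesis by simp
qed

lemma WW:
  assumes s: "0 < s" and y: "y < s^m"
  shows "(Wop s ^^ j) ((Wadj s ^^ j) w) (m, y) = (if j \<le> m then Ek s m (m-j) (\<lambda>y. w (m, y)) y else 0)"
proof (cases "j \<le> m")
  case False thus ?thesis by (auto simp: Wpow[OF s y])
next
  case True
  hence jm: "j \<le> m" by auto
  have rs0: "rs s \<noteq> 0" using s by simp
  have "(Wop s ^^ j) ((Wadj s ^^ j) w) (m, y) = (\<Sum>i<(s^j). w (m, y mod s^(m-j) + i * s^(m-j))) / (rs s)^j / (rs s)^j"
    using True s y by (simp add: Wpow Wadjpow)
  also have "\<dots> = (\<Sum>i<(s^j). w (m, y mod s^(m-j) + i * s^(m-j))) / ((rs s)^j * (rs s)^j)"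
    by (simp add: divide_divide_eq_left)
  also have "\<dots> = (\<Sum>i<(s^j). w (m, y mod s^(m-j) + i * s^(m-j))) / of_nat (s^j)"
    by (simp only: rs_sq)
  also have "\<dots> = Ek s m (m-j) (\<lambda>y. w (m, y)) y"
    using jm y s by (simp add: Ek_in sum_cls)
  finally show ?thesis using jm by simp
qed

lemma Pn_formula:
  assumes s: "0 < s" and y: "y < s^m"
  shows "Pn s n w (m, y) = (if n \<le> m then Dk s m (m-n) (\<lambda>y. w (m, y)) y else 0)"
proof -
  have lin: "(Wop s ^^ n) (a - b) p = (Wop s ^^ n) a p - (Wop s ^^ n) b p"
    if "snd p < s^(fst p)" for a b p
    using that by (cases p) (simp add: Wpow[OF s] diff_divide_distrib)
  have e1: "(Wop s ^^ n) (Wop s x) = (Wop s ^^ Suc n) x" for x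
    by (simp add: funpow_Suc_right del: funpow.simps)
  have e2: "Wadj s ((Wadj s ^^ n) w) = (Wadj s ^^ Suc n) w" by simp
  have "Pn s n w (m, y) = (Wop s ^^ n) ((Wadj s ^^ n) w - Wop s (Wadj s ((Wadj s ^^ n) w))) (m,y)"
    by (simp add: Pn_def P0_def)
  also have "\<dots> = (Wop s ^^ n) ((Wadj s ^^ n) w) (m,y) - (Wop s ^^ Suc n) ((Wadj s ^^ Suc n) w) (m,y)"
    using y by (simp add: lin e1 e2 del: funpow.simps)
  also have "\<dots> = (if n \<le> m then Dk s m (m-n) (\<lambda>y. w (m, y)) y else 0)"
    by (simp add: WW[OF s y] Dk_def del: funpow.simps)
  finally show ?thesis .
qed

lemma Pn_out:
  assumes "s^m \<le> y"
  shows "Pn s n w (m, y) = (if n = 0 then w (m, y) else 0)"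
proof (cases n)
  case 0 thus ?thesis using assms by (simp add: Pn_def P0_def Wop_def)
next
  case (Suc n') thus ?thesis using assms by (simp add: Pn_def Wop_def del: funpow.simps) (simp add: Wop_def)
qed

lemma Mop_app: "Mop s f w (m, y) = f (zs_of s y) * w (m, y)"
  by (simp add: Mop_def)

lemma TW_level:
  assumes s: "0 < s" and y: "y < s^m"
  shows "TW s g v (m, y) = Aop s m (\<lambda>n y. g n (zs_of s y)) (\<lambda>y. glim g (zs_of s y)) (\<lambda>y. v (m, y)) y"
proof -
  let ?G = "\<lambda>n y. g n (zs_of s y)" and ?Gi = "\<lambda>y. glim g (zs_of s y)"
  let ?X = "\<lambda>n. Mop s (g n) (Pn s n v) - Mop s (glim g) (Pn s n v)"
  let ?T = "\<lambda>k. Dk s m k (\<lambda>y'. (?G (m-k) y' - ?Gi y') * Dk s m k (\<lambda>y. v (m, y)) y') y"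
  have trm: "Pn s n (?X n) (m, y) = (if n \<le> m then ?T (m - n) else 0)" for n
  proof (cases "n \<le> m")
    case False thus ?thesis by (simp add: Pn_formula[OF s y])
  next
    case True
    have "Pn s n (?X n) (m, y) = Dk s m (m-n) (\<lambda>y'. ?X n (m, y')) y"
      using True by (simp add: Pn_formula[OF s y])
    also have "Dk s m (m-n) (\<lambda>y'. ?X n (m, y')) = Dk s m (m-n) (\<lambda>y'. (?G n y' - ?Gi y') * Dk s m (m-n) (\<lambda>y. v (m, y)) y')"
    proof (rule Dk_cong)
      fix y' assume y': "y' < s^m"
      show "?X n (m, y') = (?G n y' - ?Gi y') * Dk s m (m-n) (\<lambda>y. v (m, y)) y'"
        using True by (simp add: Mop_app Pn_formula[OF s y'] algebra_simps)
    qed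
    finally show ?thesis using True by (simp add: fun_diff_def)
  qed
  have "(\<Sum>n. Pn s n (?X n) (m, y)) = (\<Sum>n\<le>m. Pn s n (?X n) (m, y))"
    by (rule suminf_finite) (auto simp: trm)
  also have "\<dots> = (\<Sum>n\<le>m. ?T (m - n))"
    by (intro sum.cong refl) (simp add: trm)
  also have "\<dots> = (\<Sum>k\<le>m. ?T k)"
  proof -
    have "(\<Sum>n<Suc m. ?T (Suc m - Suc n)) = (\<Sum>k<Suc m. ?T k)" by (rule sum.nat_diff_reindex)
    thus ?thesis by (simp add: lessThan_Suc_atMost)
  qed
  finally have "(\<Sum>n. Pn s n (?X n) (m, y)) = (\<Sum>k\<le>m. ?T k)" .
  thus ?thesis by (simp add: TW_def Aop_def Mop_app)
qed

lemma TW_out: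
  assumes "s^m \<le> y" and "v (m, y) = 0"
  shows "TW s g v (m, y) = 0"
proof -
  let ?X = "\<lambda>n. Mop s (g n) (Pn s n v) - Mop s (glim g) (Pn s n v)"
  have "(\<Sum>n. Pn s n (?X n) (m, y)) = 0"
  proof -
    have "(\<Sum>n. Pn s n (?X n) (m, y)) = (\<Sum>n\<in>{0}. Pn s n (?X n) (m, y))"
      by (rule suminf_finite) (use assms in \<open>auto simp: Pn_out\<close>)
    also have "\<dots> = 0" using assms by (simp add: Pn_out Mop_app)
    finally show ?thesis .
  qed
  thus ?thesis using assms by (simp add: TW_def Mop_app)
qed

lemma Vset_Sigma: "Vset s = Sigma UNIV (\<lambda>m. {..<s^m})"
  by (auto simp: Vset_def)

lemma levels_has_sum:
  assumes supp: "\<And>m y. s^m \<le> y \<Longrightarrow> w (m, y) = 0"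
    and sm: "summable (\<lambda>m. (nrm s m (\<lambda>y. w (m, y)))^2)"
  shows "((\<lambda>p. (cmod (w p))^2) has_sum (\<Sum>m. (nrm s m (\<lambda>y. w (m, y)))^2)) UNIV"
proof -
  let ?h = "\<lambda>p. (cmod (w p))^2" and ?a = "\<lambda>m. (nrm s m (\<lambda>y. w (m, y)))^2"
  have supp': "b < s^a" if "w (a, b) \<noteq> 0" for a b using supp[of a b] that by linarith
  have f: "((\<lambda>y. ?h (m, y)) has_sum ?a m) {..<s^m}" for m
    by (simp add: nrm_sq)
  have g: "(?a has_sum suminf ?a) UNIV"
    by (rule sums_nonneg_imp_has_sum) (use sm in \<open>auto simp: summable_sums\<close>)
  have su: "?h summable_on Sigma UNIV (\<lambda>m. {..<s^m})"
    by (rule summable_on_SigmaI[OF f]) (use g in \<open>auto simp: has_sum_iff\<close>)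
  have "(?h has_sum suminf ?a) (Sigma UNIV (\<lambda>m. {..<s^m}))"
    by (rule has_sum_SigmaI[OF f g su])
  moreover have "(?h has_sum suminf ?a) (Sigma UNIV (\<lambda>m. {..<s^m})) \<longleftrightarrow> (?h has_sum suminf ?a) UNIV"
    by (rule has_sum_cong_neutral) (auto intro: supp' simp: supp)
  ultimately show ?thesis by simp
qed

lemma has_sum_levels:
  assumes supp: "\<And>m y. s^m \<le> y \<Longrightarrow> w (m, y) = 0"
    and su: "(\<lambda>p. (cmod (w p))^2) summable_on UNIV"
  shows "summable (\<lambda>m. (nrm s m (\<lambda>y. w (m, y)))^2)"
    and "(\<Sum>m. (nrm s m (\<lambda>y. w (m, y)))^2) = (\<Sum>\<^sub>\<infinity>p. (cmod (w p))^2)"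
proof -
  let ?h = "\<lambda>p. (cmod (w p))^2" and ?a = "\<lambda>m. (nrm s m (\<lambda>y. w (m, y)))^2"
  have supp': "b < s^a" if "w (a, b) \<noteq> 0" for a b using supp[of a b] that by linarith
  have f: "((\<lambda>y. ?h (m, y)) has_sum ?a m) {..<s^m}" for m
    by (simp add: nrm_sq)
  have su2: "?h summable_on Sigma UNIV (\<lambda>m. {..<s^m})"
    by (rule summable_on_subset_banach[OF su]) auto
  have eq: "infsum ?h (Sigma UNIV (\<lambda>m. {..<s^m})) = infsum ?h UNIV"
    by (rule infsum_cong_neutral) (auto intro: supp' simp: supp)
  have "(?h has_sum infsum ?h UNIV) (Sigma UNIV (\<lambda>m. {..<s^m}))"
    using su2 eq by (metis has_sum_infsum)
  hence "(?a has_sum infsum ?h UNIV) UNIV"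
    by (rule has_sum_Sigma') (rule f)
  hence "?a sums infsum ?h UNIV" by (rule has_sum_imp_sums)
  thus "summable ?a" "suminf ?a = infsum ?h UNIV" by (auto simp: sums_iff)
qed

lemma inH_levels:
  "inH s v \<longleftrightarrow> (\<forall>m y. s^m \<le> y \<longrightarrow> v (m, y) = 0) \<and> summable (\<lambda>m. (nrm s m (\<lambda>y. v (m, y)))^2)"
proof
  assume H: "inH s v"
  hence supp: "\<And>m y. s^m \<le> y \<Longrightarrow> v (m, y) = 0" by (auto simp: inH_def Vset_def)
  show "(\<forall>m y. s^m \<le> y \<longrightarrow> v (m, y) = 0) \<and> summable (\<lambda>m. (nrm s m (\<lambda>y. v (m, y)))^2)"
    using supp has_sum_levels(1)[of s v, OF supp] H by (auto simp: inH_def)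
next
  assume H: "(\<forall>m y. s^m \<le> y \<longrightarrow> v (m, y) = 0) \<and> summable (\<lambda>m. (nrm s m (\<lambda>y. v (m, y)))^2)"
  hence supp: "\<And>m y. s^m \<le> y \<Longrightarrow> v (m, y) = 0" by auto
  show "inH s v"
    unfolding inH_def
  proof (intro conjI allI impI)
    fix p assume "p \<notin> Vset s" thus "v p = 0" using supp by (cases p) (auto simp: Vset_def)
  next
    show "(\<lambda>p. (cmod (v p))\<^sup>2) summable_on UNIV"
      using levels_has_sum[of s v, OF supp] H by (auto simp: summable_on_def)
  qed
qed

lemma l2norm_levels':
  assumes "inH s v"
  shows "l2norm v = sqrt (\<Sum>m. (nrm s m (\<lambda>y. v (m, y)))^2)"
proof -
  have supp: "\<And>m y. s^m \<le> y \<Longrightarrow> v (m, y) = 0" using assms by (auto simp: inH_levels)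
  have su: "(\<lambda>p. (cmod (v p))\<^sup>2) summable_on UNIV" using assms by (auto simp: inH_def)
  have e: "(\<Sum>\<^sub>\<infinity>p. (cmod (v p))^2) = (\<Sum>m. (nrm s m (\<lambda>y. v (m, y)))^2)"
    using has_sum_levels(2)[of s v, OF supp su] by simp
  show ?thesis unfolding l2norm_def e ..
qed

lemma l2norm_levels:
  assumes "inH s v"
  shows "(l2norm v)^2 = (\<Sum>m. (nrm s m (\<lambda>y. v (m, y)))^2)"
proof -
  have "summable (\<lambda>m. (nrm s m (\<lambda>y. v (m, y)))^2)" using assms by (auto simp: inH_levels)
  hence "0 \<le> (\<Sum>m. (nrm s m (\<lambda>y. v (m, y)))^2)" by (rule suminf_nonneg) simp
  thus ?thesis unfolding l2norm_levels'[OF assms] by simp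
qed

lemma sq_add_le: "((x::real) + y)^2 \<le> 2 * x^2 + 2 * y^2"
proof -
  have "0 \<le> (x - y)^2" by simp
  thus ?thesis by (simp add: power2_eq_square algebra_simps)
qed

lemma nrm_scale_le: "nrm s m (\<lambda>y. a * u y) \<le> cmod a * nrm s m u"
  by (rule nrm_mult_bound) auto

lemma inH_comb:
  assumes u: "inH s u" and v: "inH s v"
  shows "inH s (\<lambda>p. a * u p + b * v p)"
  unfolding inH_levels
proof (intro conjI allI impI)
  fix m y assume "s^m \<le> y" thus "a * u (m, y) + b * v (m, y) = 0"
    using u v by (simp add: inH_levels)
next
  let ?U = "\<lambda>m. (nrm s m (\<lambda>y. u (m, y)))^2" and ?V = "\<lambda>m. (nrm s m (\<lambda>y. v (m, y)))^2"
  have su: "summable ?U" "summable ?V" using u v by (auto simp: inH_levels)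
  have S: "summable (\<lambda>m. 2 * (cmod a)^2 * ?U m + 2 * (cmod b)^2 * ?V m)"
    by (intro summable_add summable_mult su)
  have B: "norm ((nrm s m (\<lambda>y. a * u (m, y) + b * v (m, y)))^2) \<le> 2 * (cmod a)^2 * ?U m + 2 * (cmod b)^2 * ?V m" for m
  proof -
    have "nrm s m (\<lambda>y. a * u (m, y) + b * v (m, y)) \<le> cmod a * nrm s m (\<lambda>y. u (m, y)) + cmod b * nrm s m (\<lambda>y. v (m, y))"
      by (rule order_trans[OF nrm_add]) (intro add_mono nrm_scale_le)
    hence "(nrm s m (\<lambda>y. a * u (m, y) + b * v (m, y)))^2 \<le> (cmod a * nrm s m (\<lambda>y. u (m, y)) + cmod b * nrm s m (\<lambda>y. v (m, y)))^2"
      by (intro power_mono) auto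
    also have "\<dots> \<le> 2 * (cmod a * nrm s m (\<lambda>y. u (m, y)))^2 + 2 * (cmod b * nrm s m (\<lambda>y. v (m, y)))^2"
      by (rule sq_add_le)
    finally show ?thesis by (simp add: power_mult_distrib)
  qed
  show "summable (\<lambda>m. (nrm s m (\<lambda>y. a * u (m, y) + b * v (m, y)))^2)"
    by (rule summable_comparison_test'[OF S, of 0]) (rule B)
qed

locale lvl =
  fixes s :: nat and T :: op and Tm :: "nat \<Rightarrow> (nat \<Rightarrow> complex) \<Rightarrow> nat \<Rightarrow> complex" and C :: real
  assumes s: "0 < s"
    and rep: "\<And>v m y. inH s v \<Longrightarrow> T v (m, y) = Tm m (\<lambda>y. v (m, y)) y"
    and out: "\<And>m u y. s^m \<le> y \<Longrightarrow> Tm m u y = 0"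
    and lin: "\<And>m u w a b. Tm m (\<lambda>y. a * u y + b * w y) = (\<lambda>y. a * Tm m u y + b * Tm m w y)"
    and bnd: "\<And>m u. nrm s m (Tm m u) \<le> C * nrm s m u"
    and dec: "\<And>e. 0 < e \<Longrightarrow> \<exists>M. \<forall>m\<ge>M. \<forall>u. nrm s m (Tm m u) \<le> e * nrm s m u"
begin

lemma rep_fun: "inH s v \<Longrightarrow> (\<lambda>y. T v (m, y)) = Tm m (\<lambda>y. v (m, y))"
  by (simp add: rep)

lemma scale: "Tm m (\<lambda>y. a * u y) = (\<lambda>y. a * Tm m u y)"
  using lin[of m a u 0 u] by simp

lemma bnd_sq: "(nrm s m (Tm m u))^2 \<le> C^2 * (nrm s m u)^2"
proof -
  have "(nrm s m (Tm m u))^2 \<le> (C * nrm s m u)^2" by (intro power_mono bnd) simp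
  thus ?thesis by (simp add: power_mult_distrib)
qed

lemma inH_T:
  assumes v: "inH s v" shows "inH s (T v)"
  unfolding inH_levels
proof (intro conjI allI impI)
  fix m y assume "s^m \<le> y" thus "T v (m, y) = 0" by (simp add: rep[OF v] out)
next
  have S: "summable (\<lambda>m. C^2 * (nrm s m (\<lambda>y. v (m, y)))^2)"
    using v by (intro summable_mult) (simp add: inH_levels)
  have B: "norm ((nrm s m (\<lambda>y. T v (m, y)))^2) \<le> C^2 * (nrm s m (\<lambda>y. v (m, y)))^2" for m
    by (simp add: rep_fun[OF v] bnd_sq)
  show "summable (\<lambda>m. (nrm s m (\<lambda>y. T v (m, y)))^2)"
    by (rule summable_comparison_test'[OF S, of 0]) (rule B)
qed

lemma T_lin:
  assumes u: "inH s u" and v: "inH s v"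
  shows "T (\<lambda>p. a * u p + b * v p) = (\<lambda>p. a * T u p + b * T v p)"
proof (rule ext)
  fix p show "T (\<lambda>p. a * u p + b * v p) p = a * T u p + b * T v p"
  proof (cases p)
    case (Pair m y)
    show ?thesis using inH_comb[OF u v, of a b] u v Pair by (simp add: rep lin)
  qed
qed

lemma gauge:
  assumes v: "inH s v"
  shows "Uop \<theta> (T (Uop (- \<theta>) v)) = T v"
proof -
  have uv: "Uop (- \<theta>) v = (\<lambda>p. (\<lambda>(n,x). cis (2 * pi * real n * (- \<theta>))) p * v p + 0 * v p)"
    by (auto simp: Uop_def fun_eq_iff)
  have inH_U: "inH s (Uop (- \<theta>) v)"
    unfolding inH_levels
  proof (intro conjI allI impI)
    fix m y assume "s^m \<le> y" thus "Uop (- \<theta>) v (m, y) = 0" using v by (simp add: inH_levels Uop_def)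
  next
    have "nrm s m (\<lambda>y. Uop (- \<theta>) v (m, y)) = nrm s m (\<lambda>y. v (m, y))" for m
      by (simp add: nrm_def Uop_def norm_mult)
    thus "summable (\<lambda>m. (nrm s m (\<lambda>y. Uop (- \<theta>) v (m, y)))^2)" using v by (simp add: inH_levels)
  qed
  show ?thesis
  proof (rule ext)
    fix p show "Uop \<theta> (T (Uop (- \<theta>) v)) p = T v p"
    proof (cases p)
      case (Pair m y)
      have "T (Uop (- \<theta>) v) (m, y) = Tm m (\<lambda>y. cis (2 * pi * real m * (- \<theta>)) * v (m, y)) y"
        using inH_U by (simp add: rep Uop_def)
      also have "\<dots> = cis (2 * pi * real m * (- \<theta>)) * T v (m, y)"
        using v by (simp add: scale rep)
      finally have "T (Uop (- \<theta>) v) (m, y) = cis (2 * pi * real m * (- \<theta>)) * T v (m, y)" .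
      hence "Uop \<theta> (T (Uop (- \<theta>) v)) (m, y) = (cis (2 * pi * real m * \<theta>) * cis (2 * pi * real m * (- \<theta>))) * T v (m, y)"
        by (simp add: Uop_def)
      also have "cis (2 * pi * real m * \<theta>) * cis (2 * pi * real m * (- \<theta>)) = 1"
        by (simp add: cis_mult)
      finally show ?thesis using Pair by simp
    qed
  qed
qed

end

context lvl begin

lemma diag:
  fixes vs :: "nat \<Rightarrow> nat \<times> nat \<Rightarrow> complex"
  assumes bd: "\<And>k p. cmod (vs k p) \<le> B"
  shows "\<exists>r. strict_mono r \<and> (\<forall>p. convergent (\<lambda>k. vs (r k) p))"
proof -
  interpret D: subseqs "\<lambda>n r. convergent (\<lambda>k. vs (r k) (from_nat n :: nat \<times> nat))"
  proof
    fix n and q :: "nat \<Rightarrow> nat" assume "strict_mono q"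
    have "bounded (range (\<lambda>k. vs (q k) (from_nat n :: nat \<times> nat)))"
      unfolding bounded_iff using bd by blast
    then obtain l r where r: "strict_mono r" "((\<lambda>k. vs (q k) (from_nat n :: nat \<times> nat)) \<circ> r) \<longlonglongrightarrow> l"
      using bounded_imp_convergent_subsequence by blast
    hence "convergent (\<lambda>k. vs ((q \<circ> r) k) (from_nat n :: nat \<times> nat))"
      by (auto simp: o_def intro: convergentI)
    thus "\<exists>r'. strict_mono r' \<and> convergent (\<lambda>k. vs ((q \<circ> r') k) (from_nat n :: nat \<times> nat))"
      using r by blast
  qed
  have stab: "convergent (\<lambda>k. vs ((q \<circ> r) k) (from_nat n :: nat \<times> nat))"
    if "strict_mono r" "convergent (\<lambda>k. vs (q k) (from_nat n :: nat \<times> nat))" for r q n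
    using convergent_subseq_convergent[OF that(2) that(1)] by (simp add: o_def)
  have "convergent (\<lambda>k. vs (D.diagseq k) p)" for p
  proof -
    let ?n = "to_nat p"
    have "convergent (\<lambda>k. vs ((D.diagseq \<circ> (+) (Suc ?n)) k) (from_nat ?n :: nat \<times> nat))"
      by (rule D.diagseq_holds) (rule stab)
    hence "convergent (\<lambda>k. vs (D.diagseq (k + Suc ?n)) p)"
      by (simp add: o_def add.commute)
    thus ?thesis by (subst (asm) convergent_ignore_initial_segment)
  qed
  thus ?thesis using D.subseq_diagseq by blast
qed

lemma l2norm_nonneg: "0 \<le> l2norm v"
proof -
  have "0 \<le> (\<Sum>\<^sub>\<infinity>p. (cmod (v p))^2)" by (rule infsum_nonneg) simp
  thus ?thesis by (simp add: l2norm_def)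
qed

lemma level_le_l2:
  assumes v: "inH s v"
  shows "(nrm s m (\<lambda>y. v (m, y)))^2 \<le> (l2norm v)^2"
proof -
  have sm: "summable (\<lambda>m. (nrm s m (\<lambda>y. v (m, y)))^2)" using v by (simp add: inH_levels)
  have "(\<Sum>m\<in>{m}. (nrm s m (\<lambda>y. v (m, y)))^2) \<le> (\<Sum>m. (nrm s m (\<lambda>y. v (m, y)))^2)"
    by (rule sum_le_suminf[OF sm]) auto
  thus ?thesis by (simp add: l2norm_levels[OF v])
qed

lemma pt_le_nrm:
  assumes y: "y < s^m"
  shows "(cmod (u y))^2 \<le> (nrm s m u)^2"
  unfolding nrm_sq by (rule member_le_sum) (use y in auto)

lemma pt_bound:
  assumes v: "inH s v" and B: "l2norm v \<le> B"
  shows "cmod (v p) \<le> B"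
proof (cases p)
  case (Pair m y)
  have B0: "0 \<le> B" using B by (rule order_trans[rotated]) (rule l2norm_nonneg)
  show ?thesis
  proof (cases "y < s^m")
    case False thus ?thesis using v Pair B0 by (simp add: inH_levels)
  next
    case True
    have "(cmod (v p))^2 \<le> B^2"
    proof -
      have "(cmod (v p))^2 \<le> (nrm s m (\<lambda>y. v (m, y)))^2" using pt_le_nrm[OF True] Pair by simp
      also have "\<dots> \<le> (l2norm v)^2" by (rule level_le_l2[OF v])
      also have "\<dots> \<le> B^2" by (intro power_mono B l2norm_nonneg)
      finally show ?thesis .
    qed
    thus ?thesis using B0 by (rule power2_le_imp_le)
  qed
qed

lemma compact_main:
  fixes vs :: "nat \<Rightarrow> nat \<times> nat \<Rightarrow> complex"
  assumes vs: "\<And>k. inH s (vs k) \<and> l2norm (vs k) \<le> B"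
  shows "\<exists>r w. strict_mono r \<and> inH s w \<and> (\<lambda>k. l2norm (T (vs (r k)) - w)) \<longlonglongrightarrow> 0"
proof -
  have B0: "0 \<le> B" using vs[of 0] l2norm_nonneg[of "vs 0"] by linarith
  have vsH: "\<And>k. inH s (vs k)" using vs by blast
  obtain r where r: "strict_mono r" and cv: "\<And>p. convergent (\<lambda>k. vs (r k) p)"
    using diag[of vs B] pt_bound vs by blast
  define v where "v = (\<lambda>p. lim (\<lambda>k. vs (r k) p))"
  have lim: "\<And>p. (\<lambda>k. vs (r k) p) \<longlonglongrightarrow> v p" using cv by (simp add: v_def convergent_LIMSEQ_iff)
  have vsupp: "v (m, y) = 0" if a: "s^m \<le> y" for m y
  proof -
    have "(\<lambda>k. vs (r k) (m, y)) = (\<lambda>k. 0)" using vsH a by (simp add: inH_levels fun_eq_iff)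
    hence "(\<lambda>k. 0) \<longlonglongrightarrow> v (m, y)" using lim[of "(m, y)"] by simp
    thus ?thesis by (simp add: LIMSEQ_const_iff)
  qed
  have nv: "(\<lambda>k. (nrm s m (\<lambda>y. vs (r k) (m, y)))^2) \<longlonglongrightarrow> (nrm s m (\<lambda>y. v (m, y)))^2" for m
    unfolding nrm_sq by (intro tendsto_intros lim)
  have vsb: "(\<Sum>m<M. (nrm s m (\<lambda>y. vs k (m, y)))^2) \<le> B^2" for k M
  proof -
    have sm: "summable (\<lambda>m. (nrm s m (\<lambda>y. vs k (m, y)))^2)" using vsH by (simp add: inH_levels)
    have "(\<Sum>m<M. (nrm s m (\<lambda>y. vs k (m, y)))^2) \<le> (\<Sum>m. (nrm s m (\<lambda>y. vs k (m, y)))^2)"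
      by (rule sum_le_suminf[OF sm]) auto
    also have "\<dots> = (l2norm (vs k))^2" by (simp add: l2norm_levels[OF vsH])
    also have "\<dots> \<le> B^2" using vs[of k] by (intro power_mono l2norm_nonneg) auto
    finally show ?thesis .
  qed
  have vbound: "(\<Sum>m<M. (nrm s m (\<lambda>y. v (m, y)))^2) \<le> B^2" for M
  proof -
    have "(\<lambda>k. \<Sum>m<M. (nrm s m (\<lambda>y. vs (r k) (m, y)))^2) \<longlonglongrightarrow> (\<Sum>m<M. (nrm s m (\<lambda>y. v (m, y)))^2)"
      by (intro tendsto_sum nv)
    thus ?thesis by (rule LIMSEQ_le_const2) (use vsb in blast)
  qed
  have vsum: "summable (\<lambda>m. (nrm s m (\<lambda>y. v (m, y)))^2)"
  proof (rule bounded_imp_summable)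
    show "(\<Sum>k\<le>n. (nrm s k (\<lambda>y. v (k, y)))^2) \<le> B^2" for n
      using vbound[of "Suc n"] by (simp add: lessThan_Suc_atMost)
  qed simp
  have vH: "inH s v" by (simp add: inH_levels vsupp vsum)
  have vB: "(\<Sum>m. (nrm s m (\<lambda>y. v (m, y)))^2) \<le> B^2" by (rule suminf_le_const[OF vsum vbound])
  define d where "d = (\<lambda>k p. 1 * vs (r k) p + (-1) * v p)"
  have dH: "inH s (d k)" for k unfolding d_def by (rule inH_comb) (use vsH vH in auto)
  have Td: "T (vs (r k)) - T v = T (d k)" for k
    using T_lin[of "vs (r k)" v 1 "-1"] vsH vH by (simp add: d_def fun_eq_iff)
  have dsum: "summable (\<lambda>m. (nrm s m (\<lambda>y. d k (m, y)))^2)" for k using dH by (simp add: inH_levels)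
  have dlev: "(\<Sum>m. (nrm s m (\<lambda>y. d k (m, y)))^2) \<le> 4 * B^2" for k
  proof -
    let ?a = "\<lambda>m. (nrm s m (\<lambda>y. vs (r k) (m, y)))^2" and ?b = "\<lambda>m. (nrm s m (\<lambda>y. v (m, y)))^2"
    have sa: "summable ?a" using vsH by (simp add: inH_levels)
    have pw: "(nrm s m (\<lambda>y. d k (m, y)))^2 \<le> 2 * ?a m + 2 * ?b m" for m
    proof -
      have "nrm s m (\<lambda>y. d k (m, y)) \<le> nrm s m (\<lambda>y. vs (r k) (m, y)) + nrm s m (\<lambda>y. v (m, y))"
        unfolding d_def using nrm_diff[of s m "\<lambda>y. vs (r k) (m, y)" "\<lambda>y. v (m, y)"] by simp
      hence "(nrm s m (\<lambda>y. d k (m, y)))^2 \<le> (nrm s m (\<lambda>y. vs (r k) (m, y)) + nrm s m (\<lambda>y. v (m, y)))^2"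
        by (intro power_mono) auto
      also have "\<dots> \<le> 2 * ?a m + 2 * ?b m" by (rule sq_add_le)
      finally show ?thesis .
    qed
    have "(\<Sum>m. (nrm s m (\<lambda>y. d k (m, y)))^2) \<le> (\<Sum>m. 2 * ?a m + 2 * ?b m)"
      by (rule suminf_le[OF pw dsum]) (intro summable_add summable_mult sa vsum)
    also have "\<dots> = 2 * (\<Sum>m. ?a m) + 2 * (\<Sum>m. ?b m)"
      by (simp add: suminf_add[symmetric] suminf_mult summable_mult sa vsum)
    also have "(\<Sum>m. ?a m) \<le> B^2"
      by (rule suminf_le_const[OF sa]) (rule vsb)
    also have "(\<Sum>m. ?b m) \<le> B^2" by (rule vB)
    finally show ?thesis by simp
  qed
  have dp: "(\<lambda>k. d k p) \<longlonglongrightarrow> 0" for p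
    using tendsto_diff[OF lim[of p] tendsto_const[of "v p"]] by (simp add: d_def)
  have dlim: "(\<lambda>k. (nrm s m (\<lambda>y. d k (m, y)))^2) \<longlonglongrightarrow> 0" for m
    unfolding nrm_sq
  proof (rule tendsto_null_sum)
    fix y show "(\<lambda>k. (cmod (d k (m, y)))^2) \<longlonglongrightarrow> 0"
      using tendsto_power[OF tendsto_norm[OF dp[of "(m, y)"]], of 2] by simp
  qed
  show ?thesis
  proof (rule exI[of _ r], rule exI[of _ "T v"], intro conjI)
    show "strict_mono r" by (rule r)
    show "inH s (T v)" by (rule inH_T[OF vH])
  show "(\<lambda>k. l2norm (T (vs (r k)) - T v)) \<longlonglongrightarrow> 0"
  proof (rule LIMSEQ_I)
    fix \<epsilon> :: real assume ep: "0 < \<epsilon>"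
    define e where "e = \<epsilon> / (4 * (B + 1))"
    have e0: "0 < e" using ep B0 by (simp add: e_def)
    obtain M where M: "\<And>m u. m \<ge> M \<Longrightarrow> nrm s m (Tm m u) \<le> e * nrm s m u" using dec[OF e0] by blast
    define F where "F = (\<lambda>k. \<Sum>m<M. (nrm s m (\<lambda>y. d k (m, y)))^2)"
    have "(\<lambda>k. C^2 * F k) \<longlonglongrightarrow> 0"
      unfolding F_def by (intro tendsto_mult_right_zero tendsto_null_sum dlim)
    then obtain no where no: "\<And>k. k \<ge> no \<Longrightarrow> C^2 * F k < \<epsilon>^2 / 4"
      using LIMSEQ_D[of _ 0 "\<epsilon>^2/4"] ep by fastforce
    have eB: "e^2 * (4 * B^2) \<le> \<epsilon>^2 / 4"
    proof -
      have "e * (2 * B) \<le> \<epsilon> / 2" using ep B0 by (simp add: e_def field_simps)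
      hence "(e * (2 * B))^2 \<le> (\<epsilon> / 2)^2" by (intro power_mono) (use e0 B0 in auto)
      thus ?thesis by (simp add: power_mult_distrib power_divide)
    qed
    show "\<exists>no. \<forall>k\<ge>no. norm (l2norm (T (vs (r k)) - T v) - 0) < \<epsilon>"
    proof (intro exI allI impI)
      fix k assume k: "no \<le> k"
      let ?b = "\<lambda>m. (nrm s m (\<lambda>y. d k (m, y)))^2"
      let ?a = "\<lambda>m. (nrm s m (Tm m (\<lambda>y. d k (m, y))))^2"
      have TdH: "inH s (T (d k))" by (rule inH_T[OF dH])
      have sa: "summable ?a" using TdH by (simp add: inH_levels rep_fun[OF dH])
      have pw: "?a m \<le> (if m < M then C^2 * ?b m else 0) + e^2 * ?b m" for m
      proof (cases "m < M")
        case True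
        have "?a m \<le> C^2 * ?b m" by (rule bnd_sq)
        moreover have "0 \<le> e^2 * ?b m" by simp
        ultimately have "?a m \<le> C^2 * ?b m + e^2 * ?b m" by linarith
        thus ?thesis using True by simp
      next
        case False
        have "nrm s m (Tm m (\<lambda>y. d k (m, y))) \<le> e * nrm s m (\<lambda>y. d k (m, y))" using False M by simp
        hence "?a m \<le> (e * nrm s m (\<lambda>y. d k (m, y)))^2" by (intro power_mono) auto
        thus ?thesis using False by (simp add: power_mult_distrib)
      qed
      have sfin: "summable (\<lambda>m. if m < M then C^2 * ?b m else 0)"
        by (rule summable_finite[of "{..<M}"]) auto
      have "(l2norm (T (d k)))^2 = (\<Sum>m. ?a m)"
        by (simp add: l2norm_levels[OF TdH] rep_fun[OF dH])
      also have "\<dots> \<le> (\<Sum>m. (if m < M then C^2 * ?b m else 0) + e^2 * ?b m)"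
        by (rule suminf_le[OF pw sa]) (intro summable_add sfin summable_mult dsum)
      also have "\<dots> = (\<Sum>m. if m < M then C^2 * ?b m else 0) + e^2 * (\<Sum>m. ?b m)"
        by (simp add: suminf_add[symmetric] suminf_mult sfin summable_mult dsum)
      also have "(\<Sum>m. if m < M then C^2 * ?b m else 0) = (\<Sum>m<M. if m < M then C^2 * ?b m else 0)"
        by (rule suminf_finite) auto
      also have "\<dots> = C^2 * F k" by (simp add: F_def sum_distrib_left)
      also have "e^2 * (\<Sum>m. ?b m) \<le> e^2 * (4 * B^2)"
        by (intro mult_left_mono dlev) simp
      finally have "(l2norm (T (d k)))^2 \<le> C^2 * F k + e^2 * (4 * B^2)" by simp
      also have "\<dots> < \<epsilon>^2"
      proof -
        have "0 < \<epsilon>^2" using ep by simp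
        thus ?thesis using no[OF k] eB by linarith
      qed
      finally have "(l2norm (T (d k)))^2 < \<epsilon>^2" .
      hence "l2norm (T (d k)) < \<epsilon>" using ep by (simp add: power_less_imp_less_base)
      thus "norm (l2norm (T (vs (r k)) - T v) - 0) < \<epsilon>"
        using l2norm_nonneg[of "T (d k)"] by (simp add: Td)
    qed
  qed
  qed
qed

theorem compact_inv_T: "compact_inv s T"
  unfolding compact_inv_def compact_op_def
proof (intro conjI allI impI)
  show "inH s (T v)" if "inH s v" for v by (rule inH_T[OF that])
  show "T (\<lambda>p. a * u p + b * v p) = (\<lambda>p. a * T u p + b * T v p)" if "inH s u" "inH s v" for u v a b
    by (rule T_lin[OF that])
  show "\<exists>r w. strict_mono r \<and> inH s w \<and> (\<lambda>k. l2norm (T (vs (r k)) - w)) \<longlonglongrightarrow> 0"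
    if "\<forall>k. inH s (vs k) \<and> l2norm (vs k) \<le> B" for vs :: "nat \<Rightarrow> nat \<times> nat \<Rightarrow> complex" and B
    using compact_main[of vs B] that by blast
  show "Uop \<theta> (T (Uop (- \<theta>) v)) = T v" if "inH s v" for \<theta> v by (rule gauge[OF that])
qed

end

definition local :: "nat \<Rightarrow> nat \<Rightarrow> (nat \<Rightarrow> complex) \<Rightarrow> bool" where
  "local s K F \<longleftrightarrow> (\<forall>y. F y = F (y mod s^K))"

lemma Ek_local:
  assumes s: "0 < s" and Kk: "K \<le> k" and F: "local s K F"
  shows "Ek s m k (\<lambda>y. F y * u y) y = F y * Ek s m k u y"
proof (cases "y < s^m")
  case False thus ?thesis by simp
next
  case True
  have "(\<Sum>y'\<in>cls s m k y. F y' * u y') = (\<Sum>y'\<in>cls s m k y. F y * u y')"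
  proof (intro sum.cong refl)
    fix y' assume "y' \<in> cls s m k y"
    hence "y' mod s^k = y mod s^k" by (simp add: cls_def)
    hence "y' mod s^K = y mod s^K" by (rule mod_pow_le[OF Kk])
    hence "F y' = F y" using F unfolding local_def by metis
    thus "F y' * u y' = F y * u y'" by simp
  qed
  thus ?thesis using True by (simp add: Ek_in sum_distrib_left)
qed

lemma Dk_local:
  assumes s: "0 < s" and Kk: "K < k" and F: "local s K F"
  shows "Dk s m k (\<lambda>y. F y * u y) y = F y * Dk s m k u y"
  using Kk by (simp add: Dk_def Ek_local[OF s _ F] algebra_simps)

lemma Ek_sumf: "Ek s m k (\<lambda>y. \<Sum>l\<in>L. f l y) y = (\<Sum>l\<in>L. Ek s m k (f l) y)"
  by (simp add: Ek_def sum_divide_distrib sum.swap[of _ L])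

lemma Dk_sumf: "Dk s m k (\<lambda>y. \<Sum>l\<in>L. f l y) y = (\<Sum>l\<in>L. Dk s m k (f l) y)"
  by (simp add: Dk_def Ek_sumf sum_subtractf)

lemma Dk_add: "Dk s m k (\<lambda>y. u y + w y) y = Dk s m k u y + Dk s m k w y"
  using Dk_lin[of s m k 1 u 1 w y] by simp

definition Sop :: "nat \<Rightarrow> nat \<Rightarrow> nat \<Rightarrow> (nat \<Rightarrow> nat \<Rightarrow> complex) \<Rightarrow> (nat \<Rightarrow> complex) \<Rightarrow> (nat \<Rightarrow> complex) \<Rightarrow> nat \<Rightarrow> complex" where
  "Sop s m K \<psi> c u y = (\<Sum>k\<in>{K<..m}. \<psi> k y * Dk s m k u y) + c y * u y"

lemma Dk_Sop:
  assumes s: "0 < s" and k: "K < k" "k \<le> m" and loc: "\<And>l. local s K (\<psi> l)" "local s K c"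
  shows "Dk s m k (Sop s m K \<psi> c u) y = (\<psi> k y + c y) * Dk s m k u y"
proof -
  have "Dk s m k (Sop s m K \<psi> c u) y = (\<Sum>l\<in>{K<..m}. Dk s m k (\<lambda>y. \<psi> l y * Dk s m l u y) y) + Dk s m k (\<lambda>y. c y * u y) y"
    unfolding Sop_def[abs_def] by (simp add: Dk_add Dk_sumf)
  also have "(\<Sum>l\<in>{K<..m}. Dk s m k (\<lambda>y. \<psi> l y * Dk s m l u y) y) = (\<Sum>l\<in>{K<..m}. if k = l then \<psi> k y * Dk s m k u y else 0)"
  proof (intro sum.cong refl)
    fix l assume l: "l \<in> {K<..m}"
    have "Dk s m k (\<lambda>y. \<psi> l y * Dk s m l u y) y = \<psi> l y * Dk s m k (Dk s m l u) y"
      by (rule Dk_local[OF s k(1) loc(1)])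
    also have "\<dots> = (if k = l then \<psi> k y * Dk s m k u y else 0)"
      using l k by (simp add: Dk_Dk[OF s])
    finally show "Dk s m k (\<lambda>y. \<psi> l y * Dk s m l u y) y = (if k = l then \<psi> k y * Dk s m k u y else 0)" .
  qed
  also have "\<dots> = \<psi> k y * Dk s m k u y" using k by (simp add: sum.delta)
  also have "Dk s m k (\<lambda>y. c y * u y) y = c y * Dk s m k u y" by (rule Dk_local[OF s k(1) loc(2)])
  finally show ?thesis by (simp add: algebra_simps)
qed

lemma Sop_comp:
  assumes s: "0 < s" and loc: "\<And>l. local s K (\<psi>' l)" "local s K c'"
  shows "Sop s m K \<psi> c (Sop s m K \<psi>' c' u) y =
    Sop s m K (\<lambda>k y. \<psi> k y * \<psi>' k y + \<psi> k y * c' y + c y * \<psi>' k y) (\<lambda>y. c y * c' y) u y"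
proof -
  have "Sop s m K \<psi> c (Sop s m K \<psi>' c' u) y =
     (\<Sum>k\<in>{K<..m}. \<psi> k y * ((\<psi>' k y + c' y) * Dk s m k u y)) + c y * Sop s m K \<psi>' c' u y"
    unfolding Sop_def[of s m K \<psi> c]
    by (intro arg_cong2[where f="(+)"] sum.cong refl) (auto simp: Dk_Sop[OF s _ _ loc])
  also have "\<dots> = Sop s m K (\<lambda>k y. \<psi> k y * \<psi>' k y + \<psi> k y * c' y + c y * \<psi>' k y) (\<lambda>y. c y * c' y) u y"
    by (simp add: Sop_def sum_distrib_left sum.distrib algebra_simps)
  finally show ?thesis .
qed

lemma local_diff: "local s K F \<Longrightarrow> local s K G \<Longrightarrow> local s K (\<lambda>y. F y - G y)"
  unfolding local_def by metis

lemma local_mult: "local s K F \<Longrightarrow> local s K G \<Longrightarrow> local s K (\<lambda>y. F y * G y)"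
  unfolding local_def by metis

lemma Aop_Sop:
  assumes s: "0 < s" and NK: "N + K \<le> m" and locH: "\<And>n. local s K (H n)" and locHi: "local s K Hi"
    and stab: "\<And>n. N \<le> n \<Longrightarrow> H n = Hi"
  shows "Aop s m H Hi u y = Sop s m K (\<lambda>k y. H (m-k) y - Hi y) Hi u y"
proof -
  have Km: "K \<le> m" using NK by simp
  have split: "{..m} = {..K} \<union> {K<..m}" using Km by auto
  have "(\<Sum>k\<le>m. Dk s m k (\<lambda>y'. (H (m-k) y' - Hi y') * Dk s m k u y') y)
      = (\<Sum>k\<le>K. Dk s m k (\<lambda>y'. (H (m-k) y' - Hi y') * Dk s m k u y') y)
        + (\<Sum>k\<in>{K<..m}. Dk s m k (\<lambda>y'. (H (m-k) y' - Hi y') * Dk s m k u y') y)"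
    unfolding split by (rule sum.union_disjoint) auto
  also have "(\<Sum>k\<le>K. Dk s m k (\<lambda>y'. (H (m-k) y' - Hi y') * Dk s m k u y') y) = 0"
  proof (rule sum.neutral, rule ballI)
    fix k assume "k \<in> {..K}"
    hence "N \<le> m - k" using NK by auto
    hence "H (m-k) = Hi" by (rule stab)
    thus "Dk s m k (\<lambda>y'. (H (m-k) y' - Hi y') * Dk s m k u y') y = 0" by simp
  qed
  also have "(\<Sum>k\<in>{K<..m}. Dk s m k (\<lambda>y'. (H (m-k) y' - Hi y') * Dk s m k u y') y)
      = (\<Sum>k\<in>{K<..m}. (H (m-k) y - Hi y) * Dk s m k u y)"
  proof (intro sum.cong refl)
    fix k assume k: "k \<in> {K<..m}"
    have "Dk s m k (\<lambda>y'. (H (m-k) y' - Hi y') * Dk s m k u y') y = (H (m-k) y - Hi y) * Dk s m k (Dk s m k u) y"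
      using k by (intro Dk_local[OF s]) (auto intro: local_diff locH locHi)
    thus "Dk s m k (\<lambda>y'. (H (m-k) y' - Hi y') * Dk s m k u y') y = (H (m-k) y - Hi y) * Dk s m k u y"
      using k by (simp add: Dk_Dk[OF s])
  qed
  finally show ?thesis by (simp add: Aop_def Sop_def)
qed

lemma Sop_cong: "(\<And>k y. \<psi> k y = \<psi>' k y) \<Longrightarrow> Sop s m K \<psi> c u y = Sop s m K \<psi>' c u y"
  by (simp add: Sop_def)

lemma exact:
  assumes s: "0 < s" and NK: "N + K \<le> m"
    and locH: "\<And>n. local s K (H n)" and locHi: "local s K Hi"
    and locH': "\<And>n. local s K (H' n)" and locHi': "local s K Hi'"
    and stab: "\<And>n. N \<le> n \<Longrightarrow> H n = Hi" and stab': "\<And>n. N \<le> n \<Longrightarrow> H' n = Hi'"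
  shows "Aop s m H Hi (Aop s m H' Hi' u) y = Aop s m (\<lambda>n y. H n y * H' n y) (\<lambda>y. Hi y * Hi' y) u y"
proof -
  have inner: "Aop s m H' Hi' u = Sop s m K (\<lambda>k y. H' (m-k) y - Hi' y) Hi' u"
    by (rule ext) (rule Aop_Sop[OF s NK locH' locHi' stab'])
  have "Aop s m H Hi (Aop s m H' Hi' u) y = Sop s m K (\<lambda>k y. H (m-k) y - Hi y) Hi (Sop s m K (\<lambda>k y. H' (m-k) y - Hi' y) Hi' u) y"
    unfolding inner by (rule Aop_Sop[OF s NK locH locHi stab])
  also have "\<dots> = Sop s m K (\<lambda>k y. (H (m-k) y - Hi y) * (H' (m-k) y - Hi' y) + (H (m-k) y - Hi y) * Hi' y + Hi y * (H' (m-k) y - Hi' y)) (\<lambda>y. Hi y * Hi' y) u y"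
    by (rule Sop_comp[OF s]) (intro local_diff locH' locHi', rule locHi')
  also have "\<dots> = Sop s m K (\<lambda>k y. H (m-k) y * H' (m-k) y - Hi y * Hi' y) (\<lambda>y. Hi y * Hi' y) u y"
    by (rule Sop_cong) (simp add: algebra_simps)
  also have "\<dots> = Aop s m (\<lambda>n y. H n y * H' n y) (\<lambda>y. Hi y * Hi' y) u y"
    by (rule Aop_Sop[symmetric, OF s NK]) (auto intro: local_mult locH locH' locHi locHi' simp: stab stab')
  finally show ?thesis .
qed

lemma Aop_lin: "Aop s m G Gi (\<lambda>y. a * u y + b * w y) y = a * Aop s m G Gi u y + b * Aop s m G Gi w y"
proof -
  have "Dk s m k (\<lambda>y'. (G (m-k) y' - Gi y') * Dk s m k (\<lambda>y. a * u y + b * w y) y') y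
      = a * Dk s m k (\<lambda>y'. (G (m-k) y' - Gi y') * Dk s m k u y') y + b * Dk s m k (\<lambda>y'. (G (m-k) y' - Gi y') * Dk s m k w y') y" for k
  proof -
    have "(\<lambda>y'. (G (m-k) y' - Gi y') * Dk s m k (\<lambda>y. a * u y + b * w y) y')
       = (\<lambda>y'. a * ((G (m-k) y' - Gi y') * Dk s m k u y') + b * ((G (m-k) y' - Gi y') * Dk s m k w y'))"
      by (simp add: Dk_lin algebra_simps)
    thus ?thesis by (simp add: Dk_lin)
  qed
  thus ?thesis by (simp add: Aop_def sum.distrib sum_distrib_left algebra_simps)
qed

lemma Aop_udiff: "Aop s m G Gi u y - Aop s m G Gi w y = Aop s m G Gi (\<lambda>y. u y - w y) y"
  using Aop_lin[of s m G Gi 1 u "-1" w y] by simp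

lemma Aop_ddiff: "Aop s m G Gi u y - Aop s m H Hi u y = Aop s m (\<lambda>n y. G n y - H n y) (\<lambda>y. Gi y - Hi y) u y"
proof -
  have "Dk s m k (\<lambda>y'. (G (m-k) y' - Gi y') * Dk s m k u y') y - Dk s m k (\<lambda>y'. (H (m-k) y' - Hi y') * Dk s m k u y') y
      = Dk s m k (\<lambda>y'. ((G (m-k) y' - H (m-k) y') - (Gi y' - Hi y')) * Dk s m k u y') y" for k
    by (simp add: Dk_diff[symmetric] algebra_simps)
  thus ?thesis by (simp add: Aop_def sum_subtractf[symmetric] algebra_simps)
qed

lemma Aop_bound3:
  assumes s: "0 < s" and G: "\<And>n y. cmod (G n y) \<le> a" and Gi: "\<And>y. cmod (Gi y) \<le> a"
  shows "nrm s m (Aop s m G Gi u) \<le> 3 * a * nrm s m u"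
proof -
  have a0: "0 \<le> a" using Gi[of 0] by (rule order_trans[rotated]) simp
  have "nrm s m (Aop s m G Gi u) \<le> (2 * a + a) * nrm s m u"
  proof (rule Aop_bound[OF s])
    show "cmod (G n y - Gi y) \<le> 2 * a" for n y
      using norm_triangle_ineq4[of "G n y" "Gi y"] G[of n y] Gi[of y] by linarith
  qed (use a0 Gi in auto)
  thus ?thesis by simp
qed

lemma prod_diff_bound:
  assumes "cmod h \<le> Cb + d" "cmod (h' - g') \<le> d" "cmod (h - g) \<le> d" "cmod g' \<le> Cb" "0 \<le> d"
  shows "cmod (h * h' - g * g') \<le> (Cb + d) * d + d * Cb"
proof -
  have "h * h' - g * g' = h * (h' - g') + (h - g) * g'" by (simp add: algebra_simps)
  hence "cmod (h * h' - g * g') \<le> cmod h * cmod (h' - g') + cmod (h - g) * cmod g'"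
    by (metis norm_mult norm_triangle_ineq)
  also have "\<dots> \<le> (Cb + d) * d + d * Cb"
  proof -
    have "0 \<le> Cb + d" using assms(1) norm_ge_zero[of h] by linarith
    thus ?thesis using assms by (intro add_mono mult_mono) auto
  qed
  finally show ?thesis .
qed

lemma decay:
  assumes s: "0 < s"
    and bG: "\<And>n y. cmod (G n y) \<le> Cb" and bGi: "\<And>y. cmod (Gi y) \<le> Cb"
    and bG': "\<And>n y. cmod (G' n y) \<le> Cb" and bGi': "\<And>y. cmod (Gi' y) \<le> Cb"
    and approx: "\<And>\<delta>. 0 < \<delta> \<Longrightarrow> \<exists>N K H Hi H' Hi'. (\<forall>n. local s K (H n)) \<and> local s K Hi \<and>
       (\<forall>n. local s K (H' n)) \<and> local s K Hi' \<and> (\<forall>n\<ge>N. H n = Hi) \<and> (\<forall>n\<ge>N. H' n = Hi') \<and>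
       (\<forall>n y. cmod (G n y - H n y) \<le> \<delta>) \<and> (\<forall>y. cmod (Gi y - Hi y) \<le> \<delta>) \<and>
       (\<forall>n y. cmod (G' n y - H' n y) \<le> \<delta>) \<and> (\<forall>y. cmod (Gi' y - Hi' y) \<le> \<delta>)"
    and e: "0 < e"
  shows "\<exists>M. \<forall>m\<ge>M. \<forall>u. nrm s m (\<lambda>y. Aop s m G Gi (Aop s m G' Gi' u) y - Aop s m (\<lambda>n y. G n y * G' n y) (\<lambda>y. Gi y * Gi' y) u y) \<le> e * nrm s m u"
proof -
  have Cb0: "0 \<le> Cb" using bGi[of 0] by (rule order_trans[rotated]) simp
  define \<delta> where "\<delta> = min 1 (e / (24 * Cb + 12))"
  have d0: "0 < \<delta>" using e Cb0 by (simp add: \<delta>_def)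
  have d1: "\<delta> \<le> 1" by (simp add: \<delta>_def)
  have de: "\<delta> * (24 * Cb + 12) \<le> e"
  proof -
    have "\<delta> \<le> e / (24 * Cb + 12)" by (simp add: \<delta>_def)
    thus ?thesis using Cb0 by (simp add: field_simps)
  qed
  obtain N K H Hi H' Hi' where lH: "\<And>n. local s K (H n)" and lHi: "local s K Hi"
    and lH': "\<And>n. local s K (H' n)" and lHi': "local s K Hi'"
    and sH: "\<And>n. N \<le> n \<Longrightarrow> H n = Hi" and sH': "\<And>n. N \<le> n \<Longrightarrow> H' n = Hi'"
    and aG: "\<And>n y. cmod (G n y - H n y) \<le> \<delta>" and aGi: "\<And>y. cmod (Gi y - Hi y) \<le> \<delta>"
    and aG': "\<And>n y. cmod (G' n y - H' n y) \<le> \<delta>" and aGi': "\<And>y. cmod (Gi' y - Hi' y) \<le> \<delta>"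
    using approx[OF d0] by blast
  have bH: "cmod (H n y) \<le> Cb + \<delta>" for n y
    using norm_triangle_ineq4[of "G n y" "G n y - H n y"] bG[of n y] aG[of n y] by simp
  have bHi: "cmod (Hi y) \<le> Cb + \<delta>" for y
    using norm_triangle_ineq4[of "Gi y" "Gi y - Hi y"] bGi[of y] aGi[of y] by simp
  have bH': "cmod (H' n y) \<le> Cb + \<delta>" for n y
    using norm_triangle_ineq4[of "G' n y" "G' n y - H' n y"] bG'[of n y] aG'[of n y] by simp
  have bHi': "cmod (Hi' y) \<le> Cb + \<delta>" for y
    using norm_triangle_ineq4[of "Gi' y" "Gi' y - Hi' y"] bGi'[of y] aGi'[of y] by simp
  show ?thesis
  proof (intro exI allI impI)
    fix m u assume m: "N + K \<le> m"
    let ?w = "Aop s m G' Gi' u" and ?w' = "Aop s m H' Hi' u"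
    let ?A1 = "Aop s m (\<lambda>n y. G n y - H n y) (\<lambda>y. Gi y - Hi y) ?w"
    let ?D = "Aop s m (\<lambda>n y. G' n y - H' n y) (\<lambda>y. Gi' y - Hi' y) u"
    let ?A2 = "Aop s m H Hi ?D"
    let ?A3 = "Aop s m (\<lambda>n y. H n y * H' n y - G n y * G' n y) (\<lambda>y. Hi y * Hi' y - Gi y * Gi' y) u"
    have wD: "(\<lambda>y. ?w y - ?w' y) = ?D" by (rule ext) (rule Aop_ddiff)
    have id: "Aop s m G Gi ?w y - Aop s m (\<lambda>n y. G n y * G' n y) (\<lambda>y. Gi y * Gi' y) u y = ?A1 y + ?A2 y + ?A3 y" for y
    proof -
      have "Aop s m G Gi ?w y - Aop s m H Hi ?w y = ?A1 y" by (rule Aop_ddiff)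
      moreover have "Aop s m H Hi ?w y - Aop s m H Hi ?w' y = ?A2 y"
        by (simp add: Aop_udiff wD)
      moreover have "Aop s m H Hi ?w' y = Aop s m (\<lambda>n y. H n y * H' n y) (\<lambda>y. Hi y * Hi' y) u y"
        by (rule exact[OF s m lH lHi lH' lHi' sH sH'])
      moreover have "Aop s m (\<lambda>n y. H n y * H' n y) (\<lambda>y. Hi y * Hi' y) u y - Aop s m (\<lambda>n y. G n y * G' n y) (\<lambda>y. Gi y * Gi' y) u y = ?A3 y"
        by (rule Aop_ddiff)
      ultimately show ?thesis by (simp add: algebra_simps)
    qed
    have n1: "nrm s m ?A1 \<le> 3 * \<delta> * (3 * Cb * nrm s m u)"
    proof -
      have "nrm s m ?A1 \<le> 3 * \<delta> * nrm s m ?w" by (rule Aop_bound3[OF s]) (use aG aGi in auto)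
      also have "nrm s m ?w \<le> 3 * Cb * nrm s m u" by (rule Aop_bound3[OF s bG' bGi'])
      finally show ?thesis using d0 by (simp add: mult_left_mono)
    qed
    have n2: "nrm s m ?A2 \<le> 3 * (Cb + \<delta>) * (3 * \<delta> * nrm s m u)"
    proof -
      have "nrm s m ?A2 \<le> 3 * (Cb + \<delta>) * nrm s m ?D" by (rule Aop_bound3[OF s bH bHi])
      also have "nrm s m ?D \<le> 3 * \<delta> * nrm s m u" by (rule Aop_bound3[OF s]) (use aG' aGi' in auto)
      finally show ?thesis using d0 Cb0 by (simp add: mult_left_mono)
    qed
    have n3: "nrm s m ?A3 \<le> 3 * ((Cb + \<delta>) * \<delta> + \<delta> * Cb) * nrm s m u"
    proof (rule Aop_bound3[OF s])
      show "cmod (H n y * H' n y - G n y * G' n y) \<le> (Cb + \<delta>) * \<delta> + \<delta> * Cb" for n y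
        by (rule prod_diff_bound) (use bH aG' aG bG' d0 in \<open>auto simp: norm_minus_commute\<close>)
      show "cmod (Hi y * Hi' y - Gi y * Gi' y) \<le> (Cb + \<delta>) * \<delta> + \<delta> * Cb" for y
        by (rule prod_diff_bound) (use bHi aGi' aGi bGi' d0 in \<open>auto simp: norm_minus_commute\<close>)
    qed
    have "nrm s m (\<lambda>y. Aop s m G Gi ?w y - Aop s m (\<lambda>n y. G n y * G' n y) (\<lambda>y. Gi y * Gi' y) u y)
        = nrm s m (\<lambda>y. (?A1 y + ?A2 y) + ?A3 y)" by (simp add: id)
    also have "\<dots> \<le> (nrm s m ?A1 + nrm s m ?A2) + nrm s m ?A3"
      by (rule order_trans[OF nrm_add]) (rule add_right_mono, rule nrm_add)
    also have "\<dots> \<le> 3 * \<delta> * (3 * Cb * nrm s m u) + 3 * (Cb + \<delta>) * (3 * \<delta> * nrm s m u)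
        + 3 * ((Cb + \<delta>) * \<delta> + \<delta> * Cb) * nrm s m u"
      using n1 n2 n3 by linarith
    also have "\<dots> = \<delta> * (24 * Cb + 12 * \<delta>) * nrm s m u" by (simp add: algebra_simps)
    also have "\<dots> \<le> e * nrm s m u"
    proof (rule mult_right_mono)
      have "\<delta> * (24 * Cb + 12 * \<delta>) \<le> \<delta> * (24 * Cb + 12)" using d0 d1 by (intro mult_left_mono) auto
      thus "\<delta> * (24 * Cb + 12 * \<delta>) \<le> e" using de by linarith
    qed simp
    finally show "nrm s m (\<lambda>y. Aop s m G Gi ?w y - Aop s m (\<lambda>n y. G n y * G' n y) (\<lambda>y. Gi y * Gi' y) u y) \<le> e * nrm s m u" .
  qed
qed

lemma topspace_Zs: "topspace (Zs_top s) = {z. \<forall>i. z i < s}"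
  by (auto simp: Zs_top_def topspace_product_topology PiE_iff)

lemma zs_in: "0 < s \<Longrightarrow> zs_of s y \<in> topspace (Zs_top s)"
  by (simp add: topspace_Zs zs_of_def)

lemma digit_mod:
  assumes s: "0 < s" and i: "i < K"
  shows "zs_of s (y mod s^K) i = zs_of s y i"
proof -
  have sK: "s^K = s^i * s^(K-i)" using i by (simp add: power_add[symmetric])
  have "y mod s^K = s^i * (y div s^i mod s^(K-i)) + y mod s^i"
    unfolding sK by (rule mod_mult2_eq)
  hence "y mod s^K div s^i = y div s^i mod s^(K-i)"
    using s by simp
  moreover have "y div s^i mod s^(K-i) mod s = y div s^i mod s"
    using i by (simp add: mod_mod_cancel dvd_power)
  ultimately show ?thesis by (simp add: zs_of_def)
qed

lemma compact_Zs: "compact_space (Zs_top s)"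
  unfolding Zs_top_def compact_space_product_topology
  by (simp add: compact_space_discrete_topology)

definition cyl :: "nat \<Rightarrow> (nat \<Rightarrow> nat) \<Rightarrow> nat \<Rightarrow> (nat \<Rightarrow> nat) set" where
  "cyl s z k = {w \<in> topspace (Zs_top s). \<forall>i<k. w i = z i}"

lemma openin_cyl:
  assumes z: "z \<in> topspace (Zs_top s)"
  shows "openin (Zs_top s) (cyl s z k)"
  unfolding Zs_top_def openin_product_topology_alt
proof (intro ballI)
  fix x assume x: "x \<in> cyl s z k"
  let ?U = "\<lambda>i. if i < k then {z i} else {..<s}"
  have zs: "\<And>i. z i < s" using z by (simp add: topspace_Zs)
  show "\<exists>U. finite {i \<in> UNIV. U i \<noteq> topspace (discrete_topology {..<s})} \<and>
          (\<forall>i\<in>UNIV. openin (discrete_topology {..<s}) (U i)) \<and> x \<in> Pi\<^sub>E UNIV U \<and> Pi\<^sub>E UNIV U \<subseteq> cyl s z k"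
  proof (intro exI conjI)
    show "finite {i \<in> UNIV. ?U i \<noteq> topspace (discrete_topology {..<s})}"
      by (rule finite_subset[of _ "{..<k}"]) auto
    show "\<forall>i\<in>UNIV. openin (discrete_topology {..<s}) (?U i)" using zs by auto
    show "x \<in> Pi\<^sub>E UNIV ?U" using x by (auto simp: cyl_def topspace_Zs)
    show "Pi\<^sub>E UNIV ?U \<subseteq> cyl s z k"
    proof
      fix w assume w: "w \<in> Pi\<^sub>E UNIV ?U"
      have wi: "w i \<in> (if i < k then {z i} else {..<s})" for i using w by (simp add: PiE_iff)
      have "w i < s" for i using wi[of i] zs[of i] by (cases "i < k") auto
      moreover have "w i = z i" if "i < k" for i using wi[of i] that by simp
      ultimately show "w \<in> cyl s z k" by (auto simp: cyl_def topspace_Zs)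
    qed
  qed
qed

lemma cyl_sub:
  assumes f: "continuous_map (Zs_top s) euclidean (f :: (nat \<Rightarrow> nat) \<Rightarrow> complex)"
    and z: "z \<in> topspace (Zs_top s)" and e: "0 < e"
  shows "\<exists>k. \<forall>w\<in>cyl s z k. cmod (f w - f z) < e"
proof -
  have op: "openin (Zs_top s) {x \<in> topspace (Zs_top s). f x \<in> ball (f z) e}"
    by (rule openin_continuous_map_preimage[OF f]) simp
  have "z \<in> {x \<in> topspace (Zs_top s). f x \<in> ball (f z) e}" using z e by simp
  then obtain U where U: "finite {i \<in> UNIV. U i \<noteq> topspace (discrete_topology {..<s})}"
      "z \<in> Pi\<^sub>E UNIV U" "Pi\<^sub>E UNIV U \<subseteq> {x \<in> topspace (Zs_top s). f x \<in> ball (f z) e}"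
    using op unfolding Zs_top_def openin_product_topology_alt by blast
  obtain k where k: "{i \<in> UNIV. U i \<noteq> {..<s}} \<subseteq> {..<k}"
    using finite_nat_bounded[OF U(1)] by auto
  have "cyl s z k \<subseteq> Pi\<^sub>E UNIV U"
  proof
    fix w assume w: "w \<in> cyl s z k"
    have "w i \<in> U i" for i
    proof (cases "i < k")
      case True thus ?thesis using w U(2) by (auto simp: cyl_def PiE_iff)
    next
      case False
      hence "U i = {..<s}" using k by auto
      thus ?thesis using w by (auto simp: cyl_def topspace_Zs)
    qed
    thus "w \<in> Pi\<^sub>E UNIV U" by (simp add: PiE_iff)
  qed
  hence "\<forall>w\<in>cyl s z k. cmod (f w - f z) < e" using U(3) by (force simp: dist_norm norm_minus_commute)
  thus ?thesis by blast
qed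

lemma UC:
  assumes f: "continuous_map (Zs_top s) euclidean (f :: (nat \<Rightarrow> nat) \<Rightarrow> complex)" and e: "0 < e"
  shows "\<exists>K. \<forall>z\<in>topspace (Zs_top s). \<forall>z'\<in>topspace (Zs_top s). (\<forall>i<K. z i = z' i) \<longrightarrow> cmod (f z - f z') < e"
proof -
  have e2: "0 < e/2" using e by simp
  have "\<forall>z\<in>topspace (Zs_top s). \<exists>k. \<forall>w\<in>cyl s z k. cmod (f w - f z) < e/2"
    using cyl_sub[OF f _ e2] by blast
  then obtain kz where kz: "\<And>z w. z \<in> topspace (Zs_top s) \<Longrightarrow> w \<in> cyl s z (kz z) \<Longrightarrow> cmod (f w - f z) < e/2"
    by metis
  have cpt: "compactin (Zs_top s) (topspace (Zs_top s))" using compact_Zs by (simp add: compact_space_def)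
  have cov: "topspace (Zs_top s) \<subseteq> \<Union> ((\<lambda>z. cyl s z (kz z)) ` topspace (Zs_top s))"
    by (auto simp: cyl_def)
  have opn: "\<forall>u\<in>(\<lambda>z. cyl s z (kz z)) ` topspace (Zs_top s). openin (Zs_top s) u"
    using openin_cyl by blast
  obtain F where F: "finite F" "F \<subseteq> (\<lambda>z. cyl s z (kz z)) ` topspace (Zs_top s)" "topspace (Zs_top s) \<subseteq> \<Union>F"
    using cpt cov opn unfolding compactin_def by meson
  obtain Z where Z: "Z \<subseteq> topspace (Zs_top s)" "finite Z" "F = (\<lambda>z. cyl s z (kz z)) ` Z"
    using finite_subset_image[OF F(1) F(2)] by blast
  define K where "K = (\<Sum>z\<in>Z. kz z)"
  show ?thesis
  proof (intro exI ballI impI)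
    fix z z' assume z: "z \<in> topspace (Zs_top s)" and z': "z' \<in> topspace (Zs_top s)" and ag: "\<forall>i<K. z i = z' i"
    obtain c where c: "c \<in> Z" "z \<in> cyl s c (kz c)" using F(3) Z(3) z by auto
    have le: "kz c \<le> K" unfolding K_def by (rule member_le_sum) (use c Z in auto)
    have "z' \<in> cyl s c (kz c)" using c(2) ag le z' by (auto simp: cyl_def)
    hence "cmod (f z' - f c) < e/2" using kz Z c by blast
    moreover have "cmod (f z - f c) < e/2" using kz Z c by blast
    ultimately have "cmod (f z - f z') < e/2 + e/2"
      using norm_triangle_ineq4[of "f z - f c" "f z' - f c"] by (simp add: norm_minus_commute) 
    thus "cmod (f z - f z') < e" by simp
  qed
qed

lemma bounded_cont:
  assumes f: "continuous_map (Zs_top s) euclidean (f :: (nat \<Rightarrow> nat) \<Rightarrow> complex)"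
  shows "\<exists>B. 0 \<le> B \<and> (\<forall>z\<in>topspace (Zs_top s). cmod (f z) \<le> B)"
proof -
  have "compactin euclidean (f ` topspace (Zs_top s))"
    by (rule image_compactin[OF _ f]) (use compact_Zs in \<open>simp add: compact_space_def\<close>)
  hence "bounded (f ` topspace (Zs_top s))" by (simp add: compact_imp_bounded)
  then obtain B where "\<forall>x\<in>f ` topspace (Zs_top s). norm x \<le> B" by (auto simp: bounded_iff)
  hence "\<forall>z\<in>topspace (Zs_top s). cmod (f z) \<le> max 0 B" by auto
  thus ?thesis by (intro exI[of _ "max 0 B"]) auto
qed

lemma cseq_L:
  assumes "cseq s g"
  shows "\<exists>L. continuous_map (Zs_top s) euclidean L \<and>
     (\<forall>e>0. \<exists>N. \<forall>n\<ge>N. \<forall>z\<in>topspace (Zs_top s). cmod (g n z - L z) < e) \<and>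
     (\<forall>z\<in>topspace (Zs_top s). glim g z = L z)"
proof -
  obtain L where L: "continuous_map (Zs_top s) euclidean L"
    "\<forall>e>0. \<exists>N. \<forall>n\<ge>N. \<forall>z\<in>topspace (Zs_top s). cmod (g n z - L z) < e"
    using assms by (auto simp: cseq_def)
  have "glim g z = L z" if z: "z \<in> topspace (Zs_top s)" for z
  proof -
    have "(\<lambda>n. g n z) \<longlonglongrightarrow> L z"
    proof (rule LIMSEQ_I)
      fix r :: real assume "0 < r"
      then obtain N where "\<forall>n\<ge>N. \<forall>z\<in>topspace (Zs_top s). cmod (g n z - L z) < r" using L(2) by blast
      thus "\<exists>no. \<forall>n\<ge>no. norm (g n z - L z) < r" using z by blast
    qed
    thus ?thesis by (simp add: glim_def limI)
  qed
  thus ?thesis using L by blast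
qed

lemma UC_fin:
  fixes n :: nat
  assumes F: "\<And>i. i < n \<Longrightarrow> continuous_map (Zs_top s) euclidean (F i :: (nat \<Rightarrow> nat) \<Rightarrow> complex)" and e: "0 < e"
  shows "\<exists>K. \<forall>i<n. \<forall>z\<in>topspace (Zs_top s). \<forall>z'\<in>topspace (Zs_top s). (\<forall>j<K. z j = z' j) \<longrightarrow> cmod (F i z - F i z') < e"
  using F
proof (induction n)
  case 0 thus ?case by auto
next
  case (Suc n)
  obtain K1 where K1: "\<forall>i<n. \<forall>z\<in>topspace (Zs_top s). \<forall>z'\<in>topspace (Zs_top s). (\<forall>j<K1. z j = z' j) \<longrightarrow> cmod (F i z - F i z') < e"
    using Suc by auto
  obtain K2 where K2: "\<forall>z\<in>topspace (Zs_top s). \<forall>z'\<in>topspace (Zs_top s). (\<forall>j<K2. z j = z' j) \<longrightarrow> cmod (F n z - F n z') < e"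
    using UC[OF Suc.prems[of n] e] by auto
  show ?case
  proof (intro exI[of _ "K1 + K2"] allI impI ballI)
    fix i z z' assume i: "i < Suc n" and z: "z \<in> topspace (Zs_top s)" and z': "z' \<in> topspace (Zs_top s)"
      and ag: "\<forall>j<K1 + K2. z j = z' j"
    show "cmod (F i z - F i z') < e"
    proof (cases "i < n")
      case True thus ?thesis using K1 z z' ag by auto
    next
      case False hence "i = n" using i by simp
      thus ?thesis using K2 z z' ag by auto
    qed
  qed
qed

lemma seq_bound:
  assumes "cseq s g"
  shows "\<exists>Cb. 0 \<le> Cb \<and> (\<forall>n. \<forall>z\<in>topspace (Zs_top s). cmod (g n z) \<le> Cb) \<and> (\<forall>z\<in>topspace (Zs_top s). cmod (glim g z) \<le> Cb)"
proof -
  obtain L where L: "continuous_map (Zs_top s) euclidean L"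
     "\<forall>e>0. \<exists>N. \<forall>n\<ge>N. \<forall>z\<in>topspace (Zs_top s). cmod (g n z - L z) < e"
     "\<forall>z\<in>topspace (Zs_top s). glim g z = L z"
    using cseq_L[OF assms] by blast
  obtain N where N: "\<forall>n\<ge>N. \<forall>z\<in>topspace (Zs_top s). cmod (g n z - L z) < 1" using L(2) by fastforce
  have "\<forall>n. \<exists>B. 0 \<le> B \<and> (\<forall>z\<in>topspace (Zs_top s). cmod (g n z) \<le> B)"
    using assms by (auto simp: cseq_def intro: bounded_cont)
  then obtain Bf where "\<forall>n. 0 \<le> Bf n \<and> (\<forall>z\<in>topspace (Zs_top s). cmod (g n z) \<le> Bf n)"
    by (rule choice[THEN exE]) blast
  hence Bf: "\<And>n. 0 \<le> Bf n" "\<And>n z. z\<in>topspace (Zs_top s) \<Longrightarrow> cmod (g n z) \<le> Bf n" by auto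
  obtain BL where BL: "0 \<le> BL" "\<And>z. z\<in>topspace (Zs_top s) \<Longrightarrow> cmod (L z) \<le> BL"
    using bounded_cont[OF L(1)] by blast
  define Cb where "Cb = (\<Sum>n<N. Bf n) + BL + 1"
  have S0: "0 \<le> (\<Sum>n<N. Bf n)" by (intro sum_nonneg Bf)
  show ?thesis
  proof (intro exI[of _ Cb] conjI allI ballI)
    show "0 \<le> Cb" using S0 BL by (simp add: Cb_def)
    fix n z assume z: "z \<in> topspace (Zs_top s)"
    show "cmod (g n z) \<le> Cb"
    proof (cases "n < N")
      case True
      have "Bf n \<le> (\<Sum>n<N. Bf n)" by (rule member_le_sum) (use True Bf in auto)
      thus ?thesis using Bf(2)[OF z, of n] BL by (simp add: Cb_def)
    next
      case False
      have "cmod (g n z) \<le> cmod (L z) + cmod (g n z - L z)" by (rule norm_triangle_sub)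
      moreover have "cmod (g n z - L z) < 1" using N False z by auto
      ultimately show ?thesis using BL(2)[OF z] S0 by (simp add: Cb_def)
    qed
  next
    fix z assume z: "z \<in> topspace (Zs_top s)"
    show "cmod (glim g z) \<le> Cb" using L(3) z BL(2)[OF z] S0 by (simp add: Cb_def)
  qed
qed

definition trH :: "nat \<Rightarrow> (nat \<Rightarrow> (nat \<Rightarrow> nat) \<Rightarrow> complex) \<Rightarrow> nat \<Rightarrow> nat \<Rightarrow> nat \<Rightarrow> nat \<Rightarrow> complex" where
  "trH s g N K n y = (if n < N then g n (zs_of s (y mod s^K)) else glim g (zs_of s (y mod s^K)))"

definition trHi :: "nat \<Rightarrow> (nat \<Rightarrow> (nat \<Rightarrow> nat) \<Rightarrow> complex) \<Rightarrow> nat \<Rightarrow> nat \<Rightarrow> complex" where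
  "trHi s g K y = glim g (zs_of s (y mod s^K))"

lemma trH_local: "local s K (trH s g N K n)"
  by (simp add: local_def trH_def)

lemma trHi_local: "local s K (trHi s g K)"
  by (simp add: local_def trHi_def)

lemma trH_stab: "N \<le> n \<Longrightarrow> trH s g N K n = trHi s g K"
  by (simp add: fun_eq_iff trH_def trHi_def)

lemma seq_approx:
  assumes g: "cseq s g" and s: "0 < s" and d: "0 < \<delta>"
  shows "\<exists>N0. \<forall>N\<ge>N0. \<exists>K0. \<forall>K\<ge>K0.
    (\<forall>n y. cmod (g n (zs_of s y) - trH s g N K n y) \<le> \<delta>) \<and> (\<forall>y. cmod (glim g (zs_of s y) - trHi s g K y) \<le> \<delta>)"
proof -
  obtain L where L: "continuous_map (Zs_top s) euclidean L"
     "\<forall>e>0. \<exists>N. \<forall>n\<ge>N. \<forall>z\<in>topspace (Zs_top s). cmod (g n z - L z) < e"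
     "\<forall>z\<in>topspace (Zs_top s). glim g z = L z"
    using cseq_L[OF g] by blast
  have d2: "0 < \<delta>/2" using d by simp
  have "\<exists>N. \<forall>n\<ge>N. \<forall>z\<in>topspace (Zs_top s). cmod (g n z - L z) < \<delta>/2" using L(2) d2 by blast
  then obtain N0 where N0: "\<forall>n\<ge>N0. \<forall>z\<in>topspace (Zs_top s). cmod (g n z - L z) < \<delta>/2" ..
  show ?thesis
  proof (rule exI[of _ N0], intro allI impI)
    fix N assume NN: "N0 \<le> N"
    let ?F = "\<lambda>i. if i < N then g i else L"
    have Fc: "continuous_map (Zs_top s) euclidean (?F i)" if "i < Suc N" for i
      using g L(1) by (auto simp: cseq_def)
    from UC_fin[OF Fc d2] obtain K0 where K0: "\<forall>i<Suc N. \<forall>z\<in>topspace (Zs_top s). \<forall>z'\<in>topspace (Zs_top s). (\<forall>j<K0. z j = z' j) \<longrightarrow> cmod (?F i z - ?F i z') < \<delta>/2" ..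
    show "\<exists>K0. \<forall>K\<ge>K0. (\<forall>n y. cmod (g n (zs_of s y) - trH s g N K n y) \<le> \<delta>) \<and> (\<forall>y. cmod (glim g (zs_of s y) - trHi s g K y) \<le> \<delta>)"
    proof (rule exI[of _ K0], intro allI impI)
      fix K assume KK: "K0 \<le> K"
      have zt: "zs_of s y \<in> topspace (Zs_top s)" "zs_of s (y mod s^K) \<in> topspace (Zs_top s)" for y
        using zs_in[OF s] by auto
      have ag: "\<forall>j<K0. zs_of s y j = zs_of s (y mod s^K) j" for y using KK digit_mod[OF s] by simp
      have K0': "cmod (?F i z - ?F i z') < \<delta>/2"
        if "i < Suc N" "z \<in> topspace (Zs_top s)" "z' \<in> topspace (Zs_top s)" "\<forall>j<K0. z j = z' j" for i z z'
        using K0 that by blast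
      have LL: "cmod (L (zs_of s y) - L (zs_of s (y mod s^K))) < \<delta>/2" for y
        using K0'[of N, OF _ zt(1) zt(2) ag] by simp
      have gl: "glim g (zs_of s y) = L (zs_of s y)" "glim g (zs_of s (y mod s^K)) = L (zs_of s (y mod s^K))" for y
        using L(3) zt by auto
      show "(\<forall>n y. cmod (g n (zs_of s y) - trH s g N K n y) \<le> \<delta>) \<and> (\<forall>y. cmod (glim g (zs_of s y) - trHi s g K y) \<le> \<delta>)"
      proof (intro conjI allI)
        fix y
        let ?z = "zs_of s y" and ?z' = "zs_of s (y mod s^K)"
        have "cmod (glim g ?z - trHi s g K y) = cmod (L ?z - L ?z')" by (simp add: trHi_def gl)
        thus "cmod (glim g ?z - trHi s g K y) \<le> \<delta>" using LL[of y] norm_ge_zero[of "L ?z - L ?z'"] by linarith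
      next
        fix n y
        let ?z = "zs_of s y" and ?z' = "zs_of s (y mod s^K)"
        show "cmod (g n ?z - trH s g N K n y) \<le> \<delta>"
        proof (cases "n < N")
          case True
          have h: "cmod (g n ?z - g n ?z') < \<delta>/2" using K0'[of n, OF _ zt(1) zt(2) ag] True by simp
          have "cmod (g n ?z - trH s g N K n y) = cmod (g n ?z - g n ?z')" using True by (simp add: trH_def)
          thus ?thesis using h norm_ge_zero[of "g n ?z - g n ?z'"] by linarith
        next
          case False
          have a: "cmod (g n ?z - L ?z) < \<delta>/2" using N0 NN False zt by auto
          have "g n ?z - L ?z' = (g n ?z - L ?z) + (L ?z - L ?z')" by simp
          hence "cmod (g n ?z - L ?z') \<le> cmod (g n ?z - L ?z) + cmod (L ?z - L ?z')"
            by (simp only: norm_triangle_ineq)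
          moreover have "cmod (g n ?z - trH s g N K n y) = cmod (g n ?z - L ?z')" using False gl by (simp add: trH_def)
          ultimately show ?thesis using a LL[of y] by linarith
        qed
      qed
    qed
  qed
qed

lemma glim_tendsto:
  assumes g: "cseq s g" and z: "z \<in> topspace (Zs_top s)"
  shows "(\<lambda>n. g n z) \<longlonglongrightarrow> glim g z"
proof -
  obtain L where L: "continuous_map (Zs_top s) euclidean L"
     "\<forall>e>0. \<exists>N. \<forall>n\<ge>N. \<forall>z\<in>topspace (Zs_top s). cmod (g n z - L z) < e"
     "\<forall>z\<in>topspace (Zs_top s). glim g z = L z"
    using cseq_L[OF g] by blast
  have "(\<lambda>n. g n z) \<longlonglongrightarrow> L z"
  proof (rule LIMSEQ_I)
    fix r :: real assume "0 < r"
    then obtain N where "\<forall>n\<ge>N. \<forall>z\<in>topspace (Zs_top s). cmod (g n z - L z) < r" using L(2) by blast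
    thus "\<exists>no. \<forall>n\<ge>no. norm (g n z - L z) < r" using z by blast
  qed
  thus ?thesis using L(3) z by simp
qed

lemma glim_mult:
  assumes g: "cseq s g" and g': "cseq s g'" and z: "z \<in> topspace (Zs_top s)"
  shows "glim (\<lambda>n z. g n z * g' n z) z = glim g z * glim g' z"
proof -
  have "(\<lambda>n. g n z * g' n z) \<longlonglongrightarrow> glim g z * glim g' z"
    by (intro tendsto_mult glim_tendsto[OF g z] glim_tendsto[OF g' z])
  thus ?thesis by (simp add: glim_def limI)
qed

lemma Aop_cong:
  assumes "\<And>y'. y' < s^m \<Longrightarrow> u y' = w y'" and "y < s^m"
  shows "Aop s m G Gi u y = Aop s m G Gi w y"
proof -
  have "Dk s m k u = Dk s m k w" for k by (rule Dk_cong) (rule assms(1))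
  thus ?thesis using assms by (simp add: Aop_def)
qed

theorem proposition7p5:
  fixes s :: nat and g g' :: "nat \<Rightarrow> (nat \<Rightarrow> nat) \<Rightarrow> complex"
  assumes "s \<ge> 2" and "cseq s g" and "cseq s g'"
  shows "compact_inv s (\<lambda>v. TW s g (TW s g' v) - TW s (\<lambda>n z. g n z * g' n z) v)"
proof -
  have s: "0 < s" using assms(1) by simp
  note g = assms(2) and g' = assms(3)
  define G where "G = (\<lambda>n y. g n (zs_of s y))"
  define Gi where "Gi = (\<lambda>y. glim g (zs_of s y))"
  define G' where "G' = (\<lambda>n y. g' n (zs_of s y))"
  define Gi' where "Gi' = (\<lambda>y. glim g' (zs_of s y))"
  define Tm where "Tm = (\<lambda>m u y. if y < s^m then Aop s m G Gi (Aop s m G' Gi' u) y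
        - Aop s m (\<lambda>n y. G n y * G' n y) (\<lambda>y. Gi y * Gi' y) u y else 0)"
  let ?T = "\<lambda>v. TW s g (TW s g' v) - TW s (\<lambda>n z. g n z * g' n z) v"
  obtain Cb1 where Cb1: "0 \<le> Cb1" "\<forall>n. \<forall>z\<in>topspace (Zs_top s). cmod (g n z) \<le> Cb1"
      "\<forall>z\<in>topspace (Zs_top s). cmod (glim g z) \<le> Cb1"
    using seq_bound[OF g] by blast
  obtain Cb2 where Cb2: "0 \<le> Cb2" "\<forall>n. \<forall>z\<in>topspace (Zs_top s). cmod (g' n z) \<le> Cb2"
      "\<forall>z\<in>topspace (Zs_top s). cmod (glim g' z) \<le> Cb2"
    using seq_bound[OF g'] by blast
  define Cb where "Cb = Cb1 + Cb2"
  have zt: "zs_of s y \<in> topspace (Zs_top s)" for y by (rule zs_in[OF s])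
  have bG: "cmod (G n y) \<le> Cb" for n y
  proof -
    have "cmod (g n (zs_of s y)) \<le> Cb1" using Cb1(2) zt[of y] by blast
    thus ?thesis using Cb2(1) by (simp add: G_def Cb_def)
  qed
  have bGi: "cmod (Gi y) \<le> Cb" for y
  proof -
    have "cmod (glim g (zs_of s y)) \<le> Cb1" using Cb1(3) zt[of y] by blast
    thus ?thesis using Cb2(1) by (simp add: Gi_def Cb_def)
  qed
  have bG': "cmod (G' n y) \<le> Cb" for n y
  proof -
    have "cmod (g' n (zs_of s y)) \<le> Cb2" using Cb2(2) zt[of y] by blast
    thus ?thesis using Cb1(1) by (simp add: G'_def Cb_def)
  qed
  have bGi': "cmod (Gi' y) \<le> Cb" for y
  proof -
    have "cmod (glim g' (zs_of s y)) \<le> Cb2" using Cb2(3) zt[of y] by blast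
    thus ?thesis using Cb1(1) by (simp add: Gi'_def Cb_def)
  qed
  have Cb0: "0 \<le> Cb" using Cb1 Cb2 by (simp add: Cb_def)
  have prodG: "(\<lambda>n y. (\<lambda>n z. g n z * g' n z) n (zs_of s y)) = (\<lambda>n y. G n y * G' n y)"
    by (simp add: G_def G'_def)
  have prodGi: "(\<lambda>y. glim (\<lambda>n z. g n z * g' n z) (zs_of s y)) = (\<lambda>y. Gi y * Gi' y)"
    by (rule ext) (simp add: Gi_def Gi'_def glim_mult[OF g g' zt])
  have lv: "lvl s ?T Tm (3 * Cb * (3 * Cb) + 3 * (Cb * Cb))"
  proof
    show "0 < s" by (rule s)
  next
    fix v m y assume v: "inH s v"
    have vs: "\<And>m y. s^m \<le> y \<Longrightarrow> v (m, y) = 0" using v by (simp add: inH_levels)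
    show "?T v (m, y) = Tm m (\<lambda>y. v (m, y)) y"
    proof (cases "y < s^m")
      case True
      have "TW s g (TW s g' v) (m, y) = Aop s m G Gi (\<lambda>y. TW s g' v (m, y)) y"
        unfolding G_def Gi_def by (rule TW_level[OF s True])
      also have "\<dots> = Aop s m G Gi (Aop s m G' Gi' (\<lambda>y. v (m, y))) y"
        by (rule Aop_cong[OF _ True]) (simp add: TW_level[OF s] G'_def Gi'_def)
      finally have 1: "TW s g (TW s g' v) (m, y) = Aop s m G Gi (Aop s m G' Gi' (\<lambda>y. v (m, y))) y" .
      have 2: "TW s (\<lambda>n z. g n z * g' n z) v (m, y) = Aop s m (\<lambda>n y. G n y * G' n y) (\<lambda>y. Gi y * Gi' y) (\<lambda>y. v (m, y)) y"
        using TW_level[OF s True, of "\<lambda>n z. g n z * g' n z" v] by (simp only: prodG prodGi)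
      show ?thesis using 1 2 True by (simp add: Tm_def)
    next
      case False
      have "TW s g' v (m, y) = 0" using False vs by (intro TW_out) auto
      hence "TW s g (TW s g' v) (m, y) = 0" using False by (intro TW_out[of s m y "TW s g' v" g]) auto
      moreover have "TW s (\<lambda>n z. g n z * g' n z) v (m, y) = 0" using False vs by (intro TW_out) auto
      ultimately show ?thesis using False by (simp add: Tm_def)
    qed
  next
    fix m u y assume "s^m \<le> y" thus "Tm m u y = 0" by (simp add: Tm_def)
  next
    fix m u w a b
    have inner: "Aop s m G' Gi' (\<lambda>y. a * u y + b * w y) = (\<lambda>y. a * Aop s m G' Gi' u y + b * Aop s m G' Gi' w y)"
      by (rule ext) (rule Aop_lin)
    show "Tm m (\<lambda>y. a * u y + b * w y) = (\<lambda>y. a * Tm m u y + b * Tm m w y)"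
      by (rule ext) (simp add: Tm_def inner Aop_lin algebra_simps)
  next
    fix m u
    have "nrm s m (Tm m u) = nrm s m (\<lambda>y. Aop s m G Gi (Aop s m G' Gi' u) y - Aop s m (\<lambda>n y. G n y * G' n y) (\<lambda>y. Gi y * Gi' y) u y)"
      by (rule nrm_cong) (simp add: Tm_def)
    also have "\<dots> \<le> nrm s m (Aop s m G Gi (Aop s m G' Gi' u)) + nrm s m (Aop s m (\<lambda>n y. G n y * G' n y) (\<lambda>y. Gi y * Gi' y) u)"
      by (rule nrm_diff)
    also have "\<dots> \<le> 3 * Cb * (3 * Cb * nrm s m u) + 3 * (Cb * Cb) * nrm s m u"
    proof (rule add_mono)
      have "nrm s m (Aop s m G Gi (Aop s m G' Gi' u)) \<le> 3 * Cb * nrm s m (Aop s m G' Gi' u)"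
        by (rule Aop_bound3[OF s bG bGi])
      also have "\<dots> \<le> 3 * Cb * (3 * Cb * nrm s m u)"
        by (intro mult_left_mono Aop_bound3[OF s bG' bGi']) (use Cb0 in simp)
      finally show "nrm s m (Aop s m G Gi (Aop s m G' Gi' u)) \<le> 3 * Cb * (3 * Cb * nrm s m u)" .
      show "nrm s m (Aop s m (\<lambda>n y. G n y * G' n y) (\<lambda>y. Gi y * Gi' y) u) \<le> 3 * (Cb * Cb) * nrm s m u"
      proof (rule Aop_bound3[OF s])
        show "cmod (G n y * G' n y) \<le> Cb * Cb" for n y
          unfolding norm_mult by (intro mult_mono bG bG') (use Cb0 in auto)
        show "cmod (Gi y * Gi' y) \<le> Cb * Cb" for y
          unfolding norm_mult by (intro mult_mono bGi bGi') (use Cb0 in auto)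
      qed
    qed
    finally show "nrm s m (Tm m u) \<le> (3 * Cb * (3 * Cb) + 3 * (Cb * Cb)) * nrm s m u"
      by (simp add: algebra_simps)
  next
    fix e :: real assume e: "0 < e"
    have approx: "\<exists>N K H Hi H' Hi'. (\<forall>n. local s K (H n)) \<and> local s K Hi \<and>
       (\<forall>n. local s K (H' n)) \<and> local s K Hi' \<and> (\<forall>n\<ge>N. H n = Hi) \<and> (\<forall>n\<ge>N. H' n = Hi') \<and>
       (\<forall>n y. cmod (G n y - H n y) \<le> \<delta>) \<and> (\<forall>y. cmod (Gi y - Hi y) \<le> \<delta>) \<and>
       (\<forall>n y. cmod (G' n y - H' n y) \<le> \<delta>) \<and> (\<forall>y. cmod (Gi' y - Hi' y) \<le> \<delta>)" if d: "0 < \<delta>" for \<delta>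
    proof -
      obtain N1 where N1: "\<And>N. N \<ge> N1 \<Longrightarrow> \<exists>K0. \<forall>K\<ge>K0.
          (\<forall>n y. cmod (g n (zs_of s y) - trH s g N K n y) \<le> \<delta>) \<and> (\<forall>y. cmod (glim g (zs_of s y) - trHi s g K y) \<le> \<delta>)"
        using seq_approx[OF g s d] by blast
      obtain N2 where N2: "\<And>N. N \<ge> N2 \<Longrightarrow> \<exists>K0. \<forall>K\<ge>K0.
          (\<forall>n y. cmod (g' n (zs_of s y) - trH s g' N K n y) \<le> \<delta>) \<and> (\<forall>y. cmod (glim g' (zs_of s y) - trHi s g' K y) \<le> \<delta>)"
        using seq_approx[OF g' s d] by blast
      define N where "N = max N1 N2"
      obtain K1 where K1: "\<And>K. K \<ge> K1 \<Longrightarrow>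
          (\<forall>n y. cmod (g n (zs_of s y) - trH s g N K n y) \<le> \<delta>) \<and> (\<forall>y. cmod (glim g (zs_of s y) - trHi s g K y) \<le> \<delta>)"
        using N1[of N] unfolding N_def by (meson max.cobounded1)
      obtain K2 where K2: "\<And>K. K \<ge> K2 \<Longrightarrow>
          (\<forall>n y. cmod (g' n (zs_of s y) - trH s g' N K n y) \<le> \<delta>) \<and> (\<forall>y. cmod (glim g' (zs_of s y) - trHi s g' K y) \<le> \<delta>)"
        using N2[of N] unfolding N_def by (meson max.cobounded2)
      define K where "K = K1 + K2"
      have A1: "(\<forall>n y. cmod (g n (zs_of s y) - trH s g N K n y) \<le> \<delta>) \<and> (\<forall>y. cmod (glim g (zs_of s y) - trHi s g K y) \<le> \<delta>)"
        by (rule K1) (simp add: K_def)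
      have A2: "(\<forall>n y. cmod (g' n (zs_of s y) - trH s g' N K n y) \<le> \<delta>) \<and> (\<forall>y. cmod (glim g' (zs_of s y) - trHi s g' K y) \<le> \<delta>)"
        by (rule K2) (simp add: K_def)
      show ?thesis
        apply (rule exI[of _ N], rule exI[of _ K], rule exI[of _ "trH s g N K"], rule exI[of _ "trHi s g K"],
               rule exI[of _ "trH s g' N K"], rule exI[of _ "trHi s g' K"])
        apply (intro conjI allI impI trH_local trHi_local trH_stab)
        using A1 A2 unfolding G_def Gi_def G'_def Gi'_def by blast+
    qed
    obtain M where M: "\<forall>m\<ge>M. \<forall>u. nrm s m (\<lambda>y. Aop s m G Gi (Aop s m G' Gi' u) y - Aop s m (\<lambda>n y. G n y * G' n y) (\<lambda>y. Gi y * Gi' y) u y) \<le> e * nrm s m u"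
      using decay[OF s bG bGi bG' bGi' approx e] by blast
    show "\<exists>M. \<forall>m\<ge>M. \<forall>u. nrm s m (Tm m u) \<le> e * nrm s m u"
    proof (rule exI[of _ M], intro allI impI)
      fix m u assume "M \<le> m"
      have "nrm s m (Tm m u) = nrm s m (\<lambda>y. Aop s m G Gi (Aop s m G' Gi' u) y - Aop s m (\<lambda>n y. G n y * G' n y) (\<lambda>y. Gi y * Gi' y) u y)"
        by (rule nrm_cong) (simp add: Tm_def)
      thus "nrm s m (Tm m u) \<le> e * nrm s m u" using M \<open>M \<le> m\<close> by simp
    qed
  qed
  show ?thesis by (rule lvl.compact_inv_T[OF lv])
qed

end
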